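(* Let $\tau\in M$ be a semi-simple point and $x_a,x_b$ two one-point cycles in $V_{\tau,\lambda}$. Then the phase form $$\mathcal{W}_{a,b}(\tau,\lambda)=\sum_{i=1}^N\big(I^{(0)}_a(\tau,\lambda),\partial_i\bullet I^{(0)}_b(\tau,\lambda)\big)d\tau_i$$ satisfies $\mathcal{W}_{a,b}=d^M\log(x_a-x_b)$ if $a\ne b$, and $\mathcal{W}_{a,a}=-d^M\log\big(f'_\tau(x_a)\big)$, where $d^M$ is the de Rham differential on $M$ (with $\lambda$ fixed) and $'$ denotes $\partial/\partial x$.
   Context: Setup: fix integers $k,m\ge1$, $N=k+m$, $Q\in\mathbb{C}^*$. $M$ is the space of Laurent polynomials $f_t(x)=x^k+\sum_{i=1}^kt_ix^{k-i}+\sum_{j=1}^{m-1}t_{k+j}(Qe^{t_N}/x)^j+(Qe^{t_N}/x)^m$, $\omega=dx/x$, flat coordinates $\tau_1,\dots,\tau_N$ ($\tau_i=-\frac ki\mathrm{Res}_{x=\infty}f^{i/k}\omega$ for $1\le i\le k-1$, $\tau_{k+m-j}=\frac mj\mathrm{Res}_{x=0}f^{j/m}\omega$ for $1\le j\le m-1$, $\tau_k=t_k$, $\tau_N=mt_N$), $\partial_i=\partial/\partial\tau_i$, $f_\tau$ the corresponding Laurent polynomial, product $\bullet$ from $T_fM\cong\mathbb{C}[x,x^{-1}]/\langle\partial_xf\rangle$, residue pairing $(\partial,\partial')=-(\mathrm{Res}_{x=0}+\mathrm{Res}_{x=\infty})\frac{(\partial f\omega)(\partial'f\omega)}{df}$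 (identifying vectors and covectors). $\tau$ is semi-simple if $f_\tau$ has $N$ non-degenerate critical points whose critical values form local coordinates near $\tau$. $V_{\tau,\lambda}=f_\tau^{-1}(\lambda)$; a one-point cycle $x_a(\tau,\lambda)$ is a solution of $f_\tau(x)=\lambda$ (with a branch of $\log x_a$), varying analytically. $d^{-1}$ is linear with $d^{-1}(x^jdx)=x^{j+1}/(j+1)$ ($j\ne-1$), $d^{-1}(dx/x)=\log x$; $(I^{(0)}_a(\tau,\lambda),\partial_i)=-\partial_i\big[d^{-1}(\omega)|_{x=x_a(\tau,\lambda)}\big]=-\partial_i\log x_a(\tau,\lambda)$. *)

theory Defs
  imports "HOL-Complex_Analysis.Complex_Analysis"
begin

text \<open>Points of M are given by the parameters t_1..t_N (t :: nat => complex, only the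
values at 1..N matter).  Tangent vectors are written in these t-coordinates; all notions
below (product, residue pairing, phase form, d^M) are coordinate independent.\<close>

definition fL :: "nat \<Rightarrow> nat \<Rightarrow> complex \<Rightarrow> (nat \<Rightarrow> complex) \<Rightarrow> complex \<Rightarrow> complex" where
  "fL k m Q t x = x ^ k + (\<Sum>i=1..k. t i * x ^ (k - i))
     + (\<Sum>j=1..m-1. t (k + j) * (Q * exp (t (k + m)) / x) ^ j)
     + (Q * exp (t (k + m)) / x) ^ m"

definition fprime :: "nat \<Rightarrow> nat \<Rightarrow> complex \<Rightarrow> (nat \<Rightarrow> complex) \<Rightarrow> complex \<Rightarrow> complex" where
  "fprime k m Q t x = deriv (fL k m Q t) x"

definition shiftp :: "(nat \<Rightarrow> complex) \<Rightarrow> complex \<Rightarrow> (nat \<Rightarrow> complex) \<Rightarrow> (nat \<Rightarrow> complex)" where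
  "shiftp t s v = (\<lambda>i. t i + s * v i)"

definition tangent :: "nat \<Rightarrow> (nat \<Rightarrow> complex) \<Rightarrow> bool" where
  "tangent N v \<longleftrightarrow> (\<forall>i. i \<notin> {1..N} \<longrightarrow> v i = 0)"

text \<open>directional derivative on M (d^M applied to the vector v)\<close>
definition Dir :: "(nat \<Rightarrow> complex) \<Rightarrow> (nat \<Rightarrow> complex) \<Rightarrow> ((nat \<Rightarrow> complex) \<Rightarrow> complex) \<Rightarrow> complex" where
  "Dir t v F = deriv (\<lambda>s. F (shiftp t s v)) 0"

definition dirf :: "nat \<Rightarrow> nat \<Rightarrow> complex \<Rightarrow> (nat \<Rightarrow> complex) \<Rightarrow> (nat \<Rightarrow> complex) \<Rightarrow> complex \<Rightarrow> complex" where
  "dirf k m Q t v x = Dir t v (\<lambda>t'. fL k m Q t' x)"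

definition laurent_poly :: "(complex \<Rightarrow> complex) \<Rightarrow> bool" where
  "laurent_poly g \<longleftrightarrow> (\<exists>p :: complex poly. \<exists>n::nat. \<forall>x. x \<noteq> 0 \<longrightarrow> g x = poly p x / x ^ n)"

text \<open>u = v \<bullet> w : \<partial>_u f \<equiv> \<partial>_v f * \<partial>_w f  mod  \<partial>_x f  in C[x,x^-1]\<close>
definition is_prod :: "nat \<Rightarrow> nat \<Rightarrow> complex \<Rightarrow> (nat \<Rightarrow> complex) \<Rightarrow> (nat \<Rightarrow> complex)
     \<Rightarrow> (nat \<Rightarrow> complex) \<Rightarrow> (nat \<Rightarrow> complex) \<Rightarrow> bool" where
  "is_prod k m Q t v w u \<longleftrightarrow> tangent (k + m) u \<and>
     (\<exists>g. laurent_poly g \<and> (\<forall>x. x \<noteq> 0 \<longrightarrow>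
        dirf k m Q t u x - dirf k m Q t v x * dirf k m Q t w x = g x * fprime k m Q t x))"

definition residue_inf :: "(complex \<Rightarrow> complex) \<Rightarrow> complex" where
  "residue_inf h = residue (\<lambda>z. - h (1 / z) / z ^ 2) 0"

text \<open>residue pairing: -(Res_0 + Res_inf) (\<partial>f \<omega>)(\<partial>'f \<omega>)/df, with \<omega> = dx/x\<close>
definition pair :: "nat \<Rightarrow> nat \<Rightarrow> complex \<Rightarrow> (nat \<Rightarrow> complex) \<Rightarrow> (nat \<Rightarrow> complex)
     \<Rightarrow> (nat \<Rightarrow> complex) \<Rightarrow> complex" where
  "pair k m Q t v w =
     (let h = (\<lambda>x. dirf k m Q t v x * dirf k m Q t w x / (x ^ 2 * fprime k m Q t x))
      in - (residue h 0 + residue_inf h))"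

definition nbhd :: "nat \<Rightarrow> (nat \<Rightarrow> complex) \<Rightarrow> real \<Rightarrow> (nat \<Rightarrow> complex) set" where
  "nbhd N t r = {t'. (\<forall>i\<in>{1..N}. cmod (t' i - t i) < r) \<and> (\<forall>i. i \<notin> {1..N} \<longrightarrow> t' i = t i)}"

text \<open>analytic functions on M near t (continuous and separately holomorphic; Osgood)\<close>
definition analyticM :: "nat \<Rightarrow> ((nat \<Rightarrow> complex) \<Rightarrow> complex) \<Rightarrow> (nat \<Rightarrow> complex) \<Rightarrow> bool" where
  "analyticM N F t \<longleftrightarrow> (\<exists>r>0. continuous_on (nbhd N t r) F \<and>
     (\<forall>t'\<in>nbhd N t r. \<forall>i\<in>{1..N}. (\<lambda>z. F (t'(i := z))) field_differentiable at (t' i)))"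

definition analyticML :: "nat \<Rightarrow> ((nat \<Rightarrow> complex) \<Rightarrow> complex \<Rightarrow> complex) \<Rightarrow> (nat \<Rightarrow> complex) \<Rightarrow> complex \<Rightarrow> bool" where
  "analyticML N F t lam \<longleftrightarrow> (\<exists>r>0. continuous_on (nbhd N t r \<times> ball lam r) (\<lambda>(t', l). F t' l) \<and>
     (\<forall>t'\<in>nbhd N t r. \<forall>l\<in>ball lam r.
        (\<forall>i\<in>{1..N}. (\<lambda>z. F (t'(i := z)) l) field_differentiable at (t' i)) \<and>
        (\<lambda>z. F t' z) field_differentiable at l))"

text \<open>one-point cycle x_a(t,\<lambda>) with a branch L = log x_a, near (t, \<lambda>)\<close>
definition one_point_cycle :: "nat \<Rightarrow> nat \<Rightarrow> complex \<Rightarrow> (nat \<Rightarrow> complex) \<Rightarrow> complex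
     \<Rightarrow> ((nat \<Rightarrow> complex) \<Rightarrow> complex \<Rightarrow> complex) \<Rightarrow> ((nat \<Rightarrow> complex) \<Rightarrow> complex \<Rightarrow> complex) \<Rightarrow> bool" where
  "one_point_cycle k m Q t lam X L \<longleftrightarrow>
     analyticML (k + m) X t lam \<and> analyticML (k + m) L t lam \<and>
     (\<exists>r>0. \<forall>t'\<in>nbhd (k + m) t r. \<forall>l\<in>ball lam r.
        fL k m Q t' (X t' l) = l \<and> exp (L t' l) = X t' l)"

text \<open>semi-simple points: N non-degenerate critical points, critical values = local coordinates\<close>
definition semisimple :: "nat \<Rightarrow> nat \<Rightarrow> complex \<Rightarrow> (nat \<Rightarrow> complex) \<Rightarrow> bool" where
  "semisimple k m Q t \<longleftrightarrow> (\<exists>P r. r > 0 \<and>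
     (\<forall>j\<in>{1..k+m}. analyticM (k + m) (P j) t) \<and>
     (\<forall>t'\<in>nbhd (k + m) t r. \<forall>j\<in>{1..k+m}. P j t' \<noteq> 0 \<and> fprime k m Q t' (P j t') = 0) \<and>
     inj_on (\<lambda>j. P j t) {1..k+m} \<and>
     (\<forall>j\<in>{1..k+m}. deriv (fprime k m Q t) (P j t) \<noteq> 0) \<and>
     (\<forall>v. tangent (k + m) v \<and> (\<forall>j\<in>{1..k+m}. Dir t v (\<lambda>t'. fL k m Q t' (P j t')) = 0)
          \<longrightarrow> (\<forall>i. v i = 0)))"

text \<open>A is the vector I^(0)_a: (A, v) = - d^M log x_a (v) for every tangent vector v\<close>
definition represents_I0 :: "nat \<Rightarrow> nat \<Rightarrow> complex \<Rightarrow> (nat \<Rightarrow> complex) \<Rightarrow> complex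
     \<Rightarrow> ((nat \<Rightarrow> complex) \<Rightarrow> complex \<Rightarrow> complex) \<Rightarrow> (nat \<Rightarrow> complex) \<Rightarrow> bool" where
  "represents_I0 k m Q t lam L A \<longleftrightarrow> tangent (k + m) A \<and>
     (\<forall>v. tangent (k + m) v \<longrightarrow> pair k m Q t A v = - Dir t v (\<lambda>t'. L t' lam))"

end

theory Submission
  imports Defs
begin

lemma reversecircle_vd:
  "vector_derivative (reversepath (circlepath 0 R)) (at x) =
      - (2 * pi * \<i> * R * exp (2 * of_real pi * \<i> * of_real (1 - x)))"
proof -
  have "((circlepath 0 R) \<circ> (\<lambda>x. 1 - x) has_vector_derivative
         (-1) *\<^sub>R (2 * pi * \<i> * R * exp (2 * of_real pi * \<i> * (1 - x)))) (at x)"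
    by (intro vector_diff_chain_within has_vector_derivative_circlepath derivative_eq_intros) auto
  then have "((reversepath (circlepath 0 R)) has_vector_derivative
      (- (2 * pi * \<i> * R * exp (2 * of_real pi * \<i> * (1 - x))))) (at x)"
    by (simp add: reversepath_def o_def)
  then show ?thesis using vector_derivative_at by blast
qed

lemma exp_one_minus: "exp (2 * of_real pi * \<i> * (of_real (1 - x))) = 1 / exp (2 * of_real pi * \<i> * of_real x)"
proof -
  have "2 * of_real pi * \<i> * (of_real (1 - x)) = 2 * of_real pi * \<i> - 2 * of_real pi * \<i> * of_real x"
    by (simp add: algebra_simps)
  then show ?thesis by (simp add: exp_diff)
qed

lemma resinf_circ:
  fixes h :: "complex \<Rightarrow> complex"
  assumes "e > 0"
  shows "((\<lambda>z. - h (1/z) / z^2) has_contour_integral I) (circlepath 0 e) \<longleftrightarrow>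
         (h has_contour_integral I) (reversepath (circlepath 0 (1/e)))"
proof -
  have eq: "(- h (1 / circlepath 0 e x) / (circlepath 0 e x)\<^sup>2) * vector_derivative (circlepath 0 e) (at x)
     = h (reversepath (circlepath 0 (1/e)) x) * vector_derivative (reversepath (circlepath 0 (1/e))) (at x)"
    for x
  proof -
    define E where "E = exp (2 * of_real pi * \<i> * of_real x)"
    have E0: "E \<noteq> 0" by (simp add: E_def)
    have "exp (2 * of_real pi * \<i> * (of_real (1 - x))) = 1 / E"
      unfolding E_def by (rule exp_one_minus)
    then have e1: "exp (2 * of_real pi * \<i> * (1 - of_real x)) = 1 / E" by simp
    have c1: "circlepath 0 e x = of_real e * E" by (simp add: circlepath E_def)
    have c2: "reversepath (circlepath 0 (1/e)) x = 1 / (of_real e * E)"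
      by (simp add: reversepath_def circlepath e1)
    have e2: "exp (2 * of_real pi * \<i> * of_real (1 - x)) = 1 / E" using e1 by simp
    show ?thesis
      unfolding c1 c2 reversecircle_vd vector_derivative_circlepath e2 E_def[symmetric]
      using E0 assms by (simp add: field_simps power2_eq_square)
  qed
  show ?thesis unfolding has_contour_integral using eq by simp
qed

lemma GRT:
  fixes h :: "complex \<Rightarrow> complex"
  assumes fin: "finite S" and holo: "h holomorphic_on (UNIV - S)"
  shows "(\<Sum>p\<in>insert 0 S. residue h p) + residue_inf h = 0"
proof -
  define P where "P = insert 0 S"
  have finP: "finite P" using fin by (simp add: P_def)
  define R where "R = Max (norm ` P) + 1"
  have Rp: "\<And>p. p \<in> P \<Longrightarrow> norm p < R"
  proof -
    fix p assume p: "p \<in> P"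
    have "norm p \<le> Max (norm ` P)" using finP p by (intro Max_ge) auto
    then show "norm p < R" unfolding R_def by simp
  qed
  have R0: "R > 0" using Rp[of 0] by (simp add: P_def)
  define e where "e = 1 / R"
  have e0: "e > 0" using R0 by (simp add: e_def)
  define G where "G = (\<lambda>z. - h (1/z) / z^2)"
  have holP: "h holomorphic_on (UNIV - P)" using holo by (rule holomorphic_on_subset) (auto simp: P_def)
  have Gholo: "G holomorphic_on (ball 0 e - {0})"
  proof -
    have "(h \<circ> (\<lambda>z. 1/z)) holomorphic_on (ball 0 e - {0})"
    proof (rule holomorphic_on_compose_gen[OF _ holP])
      show "(\<lambda>z. 1/z) holomorphic_on (ball 0 e - {0})" by (intro holomorphic_intros) auto
      show "(\<lambda>z. 1/z) ` (ball 0 e - {0}) \<subseteq> UNIV - P"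
      proof
        fix y :: complex assume "y \<in> (\<lambda>z. 1/z) ` (ball 0 e - {0})"
        then obtain z where z: "z \<in> ball 0 e - {0}" and yz: "y = 1/z" by (rule imageE)
        have "y \<notin> P"
        proof
          assume "y \<in> P" then have zP: "1/z \<in> P" using yz by simp
        have "norm z < e" "z \<noteq> 0" using z by auto
        then have "norm (1/z) > R" using R0 by (simp add: e_def norm_divide field_simps)
        with Rp[OF zP] show False by simp
      qed
      then show "y \<in> UNIV - P" by simp
      qed
    qed
    then show ?thesis unfolding G_def o_def by (intro holomorphic_intros) auto
  qed
  have "(G has_contour_integral 2 * pi * \<i> * residue G 0) (circlepath 0 (e/2))"
    by (rule base_residue[of "ball 0 e"]) (use e0 Gholo in auto)
  then have "(h has_contour_integral 2 * pi * \<i> * residue G 0) (reversepath (circlepath 0 (1/(e/2))))"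
    using resinf_circ[of "e/2" h] e0 unfolding G_def by simp
  then have "(h has_contour_integral - (2 * pi * \<i> * residue G 0)) (circlepath 0 (1/(e/2)))"
    using has_contour_integral_reversepath[of "reversepath (circlepath 0 (1/(e/2)))"] by fastforce
  then have "(h has_contour_integral - (2 * pi * \<i> * residue_inf h)) (circlepath 0 (2*R))"
    using e0 unfolding residue_inf_def G_def e_def by (simp add: mult.commute)
  then have ci1: "contour_integral (circlepath 0 (2*R)) h = - (2 * pi * \<i> * residue_inf h)"
    by (rule contour_integral_unique)
  have Rp2: "\<And>p. p \<in> P \<Longrightarrow> norm p < 2*R" using Rp R0 by fastforce
  have "contour_integral (circlepath 0 (2*R)) h =
      2 * pi * \<i> * (\<Sum>p\<in>P. winding_number (circlepath 0 (2*R)) p * residue h p)"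
  proof (rule Residue_theorem[of UNIV P])
    show "path_image (circlepath 0 (2 * R)) \<subseteq> UNIV - P"
      using Rp2 R0 by (auto simp: path_image_circlepath sphere_def) (metis less_irrefl)
  qed (use finP holP in auto)
  also have "\<dots> = 2 * pi * \<i> * (\<Sum>p\<in>P. residue h p)"
    using Rp2 by (intro arg_cong[where f="\<lambda>x. 2 * pi * \<i> * x"] sum.cong refl)
       (simp add: winding_number_circlepath)
  finally have "2 * pi * \<i> * (\<Sum>p\<in>P. residue h p) = - (2 * pi * \<i> * residue_inf h)"
    using ci1 by simp
  then have "(2 * pi * \<i>) * (\<Sum>p\<in>P. residue h p) + (2 * pi * \<i>) * residue_inf h = 0"
    by (simp only: eq_neg_iff_add_eq_0)
  then have "(2 * pi * \<i>) * ((\<Sum>p\<in>P. residue h p) + residue_inf h) = 0"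
    by (simp only: distrib_left)
  then show ?thesis unfolding P_def by simp
qed

definition Rf :: "(complex \<Rightarrow> complex) \<Rightarrow> complex" where
  "Rf h = residue h 0 + residue_inf h"

definition goodf :: "(complex \<Rightarrow> complex) \<Rightarrow> bool" where
  "goodf h \<longleftrightarrow> (\<exists>S. finite S \<and> h holomorphic_on (UNIV - S))"

lemma Ginf_holo:
  fixes h :: "complex \<Rightarrow> complex"
  assumes fin: "finite S" and holo: "h holomorphic_on (UNIV - S)"
  shows "\<exists>e>0. (\<lambda>z. - h (1/z) / z^2) holomorphic_on (ball 0 e - {0})"
proof -
  define P where "P = insert 0 S"
  have finP: "finite P" using fin by (simp add: P_def)
  define R where "R = Max (norm ` P) + 1"
  have Rp: "\<And>p. p \<in> P \<Longrightarrow> norm p < R"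
  proof -
    fix p assume p: "p \<in> P"
    have "norm p \<le> Max (norm ` P)" using finP p by (intro Max_ge) auto
    then show "norm p < R" unfolding R_def by simp
  qed
  have R0: "R > 0" using Rp[of 0] by (simp add: P_def)
  define e where "e = 1 / R"
  have e0: "e > 0" using R0 by (simp add: e_def)
  have holP: "h holomorphic_on (UNIV - P)" using holo by (rule holomorphic_on_subset) (auto simp: P_def)
  have "(h \<circ> (\<lambda>z. 1/z)) holomorphic_on (ball 0 e - {0})"
  proof (rule holomorphic_on_compose_gen[OF _ holP])
    show "(\<lambda>z. 1/z) holomorphic_on (ball 0 e - {0})" by (intro holomorphic_intros) auto
    show "(\<lambda>z. 1/z) ` (ball 0 e - {0}) \<subseteq> UNIV - P"
    proof
      fix y :: complex assume "y \<in> (\<lambda>z. 1/z) ` (ball 0 e - {0})"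
      then obtain z where z: "z \<in> ball 0 e - {0}" and yz: "y = 1/z" by (rule imageE)
      have "y \<notin> P"
      proof
        assume "y \<in> P" then have zP: "1/z \<in> P" using yz by simp
        have "norm z < e" "z \<noteq> 0" using z by auto
        then have "norm (1/z) > R" using R0 by (simp add: e_def norm_divide field_simps)
        with Rp[OF zP] show False by simp
      qed
      then show "y \<in> UNIV - P" by simp
    qed
  qed
  then have "(\<lambda>z. - h (1/z) / z^2) holomorphic_on (ball 0 e - {0})"
    unfolding o_def by (intro holomorphic_intros) auto
  then show ?thesis using e0 by blast
qed

lemma Rf_holo0:
  assumes "h holomorphic_on (UNIV - {0})"
  shows "Rf h = 0"
  using GRT[of "{0}" h] assms by (simp add: Rf_def)

lemma Rf_pole1:
  assumes c: "c \<noteq> 0" and holo: "phi holomorphic_on (UNIV - {0})"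
  shows "Rf (\<lambda>x. phi x / (x - c)) = - phi c"
proof -
  have h: "(\<lambda>x. phi x / (x - c)) holomorphic_on (UNIV - {0, c})"
    by (intro holomorphic_intros holomorphic_on_subset[OF holo]) auto
  have "residue (\<lambda>x. phi x / (x - c)) c = phi c"
    by (rule residue_simple[of "UNIV - {0}"]) (use c holo in \<open>auto intro: open_delete\<close>)
  moreover have "phi c + (residue_inf (\<lambda>x. phi x / (x - c)) + residue (\<lambda>x. phi x / (x - c)) 0) = 0"
    using GRT[OF _ h] c calculation by (simp add: algebra_simps)
  ultimately show ?thesis unfolding Rf_def by (simp add: add_eq_0_iff add.commute)
qed

lemma Rf_pole2:
  assumes c: "c \<noteq> 0" and holo: "phi holomorphic_on (UNIV - {0})"
  shows "Rf (\<lambda>x. phi x / (x - c)^2) = - deriv phi c"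
proof -
  have h: "(\<lambda>x. phi x / (x - c)^2) holomorphic_on (UNIV - {0, c})"
    by (intro holomorphic_intros holomorphic_on_subset[OF holo]) auto
  have "residue (\<lambda>x. phi x / (x - c) ^ Suc 1) c = (deriv ^^ 1) phi c / fact 1"
    by (rule residue_holomorphic_over_power[of "UNIV - {0}"]) (use c holo in \<open>auto intro: open_delete\<close>)
  then have "residue (\<lambda>x. phi x / (x - c)^2) c = deriv phi c" by (simp add: numeral_2_eq_2)
  moreover have "deriv phi c + (residue_inf (\<lambda>x. phi x / (x - c)^2) + residue (\<lambda>x. phi x / (x - c)^2) 0) = 0"
    using GRT[OF _ h] c calculation by (simp add: algebra_simps)
  ultimately show ?thesis unfolding Rf_def by (simp add: add_eq_0_iff add.commute)
qed

lemma finite_avoid_at: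
  assumes "finite Z"
  shows "eventually (\<lambda>x. x \<notin> Z) (at (z::complex))"
proof -
  obtain e where e: "e > 0" "\<forall>w\<in>ball z e. w \<in> UNIV \<and> (w \<noteq> z \<longrightarrow> w \<notin> Z)"
    using finite_ball_avoid[of UNIV Z z] assms by auto
  then show ?thesis unfolding eventually_at by (auto simp: dist_commute intro!: exI[of _ e])
qed

lemma Rf_cong:
  assumes "finite Z" and eq: "\<And>x. x \<notin> Z \<Longrightarrow> h1 x = h2 x"
  shows "Rf h1 = Rf h2"
proof -
  have "residue h1 0 = residue h2 0"
    by (rule residue_cong[OF eventually_mono[OF finite_avoid_at[OF assms(1)]]]) (auto simp: eq)
  moreover have "residue_inf h1 = residue_inf h2"
    unfolding residue_inf_def
  proof (rule residue_cong[OF eventually_mono[OF finite_avoid_at]])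
    show "finite ((\<lambda>x. 1/x) ` Z)" using assms(1) by simp
    show "- h1 (1 / x) / x\<^sup>2 = - h2 (1 / x) / x\<^sup>2" if "x \<notin> (\<lambda>x. 1/x) ` Z" for x
    proof -
      have "1/x \<notin> Z" using that by (metis image_eqI divide_divide_eq_right div_by_1 mult_1)
      then show ?thesis by (simp add: eq)
    qed
  qed simp
  ultimately show ?thesis by (simp add: Rf_def)
qed

lemma goodf_res0:
  assumes "goodf h"
  shows "\<exists>r>0. h holomorphic_on (ball 0 r - {0})"
proof -
  obtain S where S: "finite S" "h holomorphic_on (UNIV - S)" using assms goodf_def by auto
  obtain e where e: "e > 0" "\<forall>w\<in>ball 0 e. w \<in> UNIV \<and> (w \<noteq> 0 \<longrightarrow> w \<notin> S)"
    using finite_ball_avoid[of UNIV S 0] S(1) by auto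
  have "h holomorphic_on (ball 0 e - {0})" by (rule holomorphic_on_subset[OF S(2)]) (use e in auto)
  then show ?thesis using e by blast
qed

lemma Rf_add:
  assumes g1: "goodf h1" and g2: "goodf h2"
  shows "Rf (\<lambda>x. h1 x + h2 x) = Rf h1 + Rf h2"
proof -
  obtain r1 where r1: "r1 > 0" "h1 holomorphic_on (ball 0 r1 - {0})" using goodf_res0[OF g1] by auto
  obtain r2 where r2: "r2 > 0" "h2 holomorphic_on (ball 0 r2 - {0})" using goodf_res0[OF g2] by auto
  define r where "r = min r1 r2"
  have a1: "h1 holomorphic_on (ball 0 r - {0})" by (rule holomorphic_on_subset[OF r1(2)]) (auto simp: r_def)
  have a2: "h2 holomorphic_on (ball 0 r - {0})" by (rule holomorphic_on_subset[OF r2(2)]) (auto simp: r_def)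
  have res0: "residue (\<lambda>x. h1 x + h2 x) 0 = residue h1 0 + residue h2 0"
    by (rule residue_add[of "ball 0 r"]) (use r1 r2 a1 a2 in \<open>auto simp: r_def\<close>)
  obtain S1 where S1: "finite S1" "h1 holomorphic_on (UNIV - S1)" using g1 goodf_def by auto
  obtain S2 where S2: "finite S2" "h2 holomorphic_on (UNIV - S2)" using g2 goodf_def by auto
  obtain e1 where e1: "e1 > 0" "(\<lambda>z. - h1 (1/z) / z^2) holomorphic_on (ball 0 e1 - {0})"
    using Ginf_holo[OF S1] by auto
  obtain e2 where e2: "e2 > 0" "(\<lambda>z. - h2 (1/z) / z^2) holomorphic_on (ball 0 e2 - {0})"
    using Ginf_holo[OF S2] by auto
  define e where "e = min e1 e2"
  have b1: "(\<lambda>z. - h1 (1/z) / z^2) holomorphic_on (ball 0 e - {0})"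
    by (rule holomorphic_on_subset[OF e1(2)]) (auto simp: e_def)
  have b2: "(\<lambda>z. - h2 (1/z) / z^2) holomorphic_on (ball 0 e - {0})"
    by (rule holomorphic_on_subset[OF e2(2)]) (auto simp: e_def)
  have "residue_inf (\<lambda>x. h1 x + h2 x) = residue (\<lambda>z. (- h1 (1/z) / z^2) + (- h2 (1/z) / z^2)) 0"
    unfolding residue_inf_def by (rule arg_cong2[where f=residue]) (auto intro!: ext simp: add_divide_distrib diff_divide_distrib)
  also have "\<dots> = residue_inf h1 + residue_inf h2"
    unfolding residue_inf_def
    by (rule residue_add[of "ball 0 e"]) (use e1 e2 b1 b2 in \<open>auto simp: e_def\<close>)
  finally show ?thesis using res0 by (simp add: Rf_def)
qed

lemma Rf_cmult:
  assumes g1: "goodf h1"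
  shows "Rf (\<lambda>x. c * h1 x) = c * Rf h1"
proof -
  obtain r1 where r1: "r1 > 0" "h1 holomorphic_on (ball 0 r1 - {0})" using goodf_res0[OF g1] by auto
  have res0: "residue (\<lambda>x. c * h1 x) 0 = c * residue h1 0"
    by (rule residue_lmul[of "ball 0 r1"]) (use r1 in auto)
  obtain S1 where S1: "finite S1" "h1 holomorphic_on (UNIV - S1)" using g1 goodf_def by auto
  obtain e1 where e1: "e1 > 0" "(\<lambda>z. - h1 (1/z) / z^2) holomorphic_on (ball 0 e1 - {0})"
    using Ginf_holo[OF S1] by auto
  have "residue_inf (\<lambda>x. c * h1 x) = residue (\<lambda>z. c * (- h1 (1/z) / z^2)) 0"
    unfolding residue_inf_def by (rule arg_cong2[where f=residue]) (auto simp: field_simps)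
  also have "\<dots> = c * residue_inf h1"
    unfolding residue_inf_def
    by (rule residue_lmul[of "ball 0 e1"]) (use e1 in auto)
  finally show ?thesis using res0 by (simp add: Rf_def algebra_simps)
qed

lemma goodf_add: "goodf h1 \<Longrightarrow> goodf h2 \<Longrightarrow> goodf (\<lambda>x. h1 x + h2 x)"
  unfolding goodf_def
proof (elim exE conjE)
  fix S1 S2 assume "finite S1" "h1 holomorphic_on UNIV - S1" "finite S2" "h2 holomorphic_on UNIV - S2"
  then show "\<exists>S. finite S \<and> (\<lambda>x. h1 x + h2 x) holomorphic_on UNIV - S"
    by (intro exI[of _ "S1 \<union> S2"]) (auto intro!: holomorphic_intros elim: holomorphic_on_subset)
qed

lemma goodf_cmult: "goodf h1 \<Longrightarrow> goodf (\<lambda>x. c * h1 x)"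
  unfolding goodf_def by (auto intro!: holomorphic_intros)

lemma goodf_rat:
  assumes "Qp \<noteq> 0"
  shows "goodf (\<lambda>x. poly P x / poly Qp x)"
  unfolding goodf_def
  by (intro exI[of _ "{x. poly Qp x = 0}"]) (auto simp: poly_roots_finite assms intro!: holomorphic_intros)

lemma Rf_Z:
  fixes P Qp :: "complex poly"
  assumes Q0: "poly Qp 0 \<noteq> 0" and deg: "degree P + 2 \<le> degree Qp"
  shows "Rf (\<lambda>x. poly P x / poly Qp x) = 0"
proof -
  have "residue (\<lambda>x. poly P x / poly Qp x) 0 = 0"
    by (rule residue_holo[of "{x. poly Qp x \<noteq> 0}"])
       (use Q0 in \<open>auto intro!: holomorphic_intros open_Collect_neq continuous_intros\<close>)
  moreover have "residue_inf (\<lambda>x. poly P x / poly Qp x) = 0"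
  proof -
    define g where "g = (\<lambda>z. - (poly (reflect_poly P) z * z ^ (degree Qp - degree P - 2)) / poly (reflect_poly Qp) z)"
    have "residue_inf (\<lambda>x. poly P x / poly Qp x) = residue g 0"
      unfolding residue_inf_def
    proof (rule residue_cong)
      have "- (poly P (1 / z) / poly Qp (1 / z)) / z\<^sup>2 = g z" if z: "z \<noteq> 0" for z
      proof -
        have p1: "poly P (1/z) = poly (reflect_poly P) z / z ^ degree P"
          using poly_reflect_poly_nz[OF z, of P] z by (simp add: field_simps)
        have p2: "poly Qp (1/z) = poly (reflect_poly Qp) z / z ^ degree Qp"
          using poly_reflect_poly_nz[OF z, of Qp] z by (simp add: field_simps)
        define d where "d = degree Qp - degree P - 2"
        have dq: "degree Qp = d + degree P + 2" using deg by (simp add: d_def)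
        have "z ^ degree Qp = z ^ (d + degree P + 2)" using dq by simp
        also have "\<dots> = z ^ d * z ^ degree P * z^2" by (simp only: power_add)
        finally have pw: "z ^ degree Qp = z ^ (degree Qp - degree P - 2) * z ^ degree P * z^2"
          by (simp add: d_def)
        show "- (poly P (1 / z) / poly Qp (1 / z)) / z\<^sup>2 = g z"
          unfolding p1 p2 g_def using z by (simp add: pw field_simps)
      qed
      then show "\<forall>\<^sub>F z in at 0. - (poly P (1 / z) / poly Qp (1 / z)) / z\<^sup>2 = g z"
        unfolding eventually_at by (intro exI[of _ 1]) auto
    qed simp
    also have "\<dots> = 0"
    proof (rule residue_holo[of "{z. poly (reflect_poly Qp) z \<noteq> 0}"])
      have "Qp \<noteq> 0" using Q0 by auto
      then show "0 \<in> {z. poly (reflect_poly Qp) z \<noteq> 0}" by (simp add: poly_0_coeff_0)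
    qed (auto simp: g_def intro!: holomorphic_intros open_Collect_neq continuous_intros)
    finally show ?thesis .
  qed
  ultimately show ?thesis by (simp add: Rf_def)
qed

definition LPI :: "int set \<Rightarrow> (int \<Rightarrow> complex) \<Rightarrow> complex \<Rightarrow> complex" where
  "LPI I c x = (\<Sum>n\<in>I. c n * x powi n)"
definition LPId :: "int set \<Rightarrow> (int \<Rightarrow> complex) \<Rightarrow> complex \<Rightarrow> complex" where
  "LPId I c x = (\<Sum>n\<in>I. c n * of_int n * x powi (n - 1))"
definition LPIdd :: "int set \<Rightarrow> (int \<Rightarrow> complex) \<Rightarrow> complex \<Rightarrow> complex" where
  "LPIdd I c x = (\<Sum>n\<in>I. c n * of_int n * of_int (n - 1) * x powi (n - 2))"

lemma powi_deriv:
  assumes "x \<noteq> 0"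
  shows "((\<lambda>x. a * x powi n) has_field_derivative (a * of_int n * x powi (n - 1))) (at x within S)"
proof -
  have "((\<lambda>x. x powi n) has_field_derivative (of_int n * x powi (n - 1) * 1)) (at x within S)"
    by (rule DERIV_power_int[OF DERIV_ident]) (use assms in auto)
  from DERIV_cmult[OF this, of a] show ?thesis by (simp add: mult.assoc)
qed

lemma LPI_deriv:
  assumes "x \<noteq> 0"
  shows "(LPI I c has_field_derivative LPId I c x) (at x within S)"
  unfolding LPI_def LPId_def
  by (rule DERIV_sum, rule powi_deriv[OF assms])

lemma LPId_deriv:
  assumes "x \<noteq> 0"
  shows "(LPId I c has_field_derivative LPIdd I c x) (at x within S)"
  unfolding LPIdd_def LPId_def
proof (rule DERIV_sum)
  fix n
  from powi_deriv[OF assms, of "c n * of_int n" "n - 1" S]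
  show "((\<lambda>x. c n * of_int n * x powi (n - 1)) has_field_derivative c n * of_int n * of_int (n - 1) * x powi (n - 2)) (at x within S)"
    by (simp add: algebra_simps)
qed

lemma LPI_holo: "LPI I c holomorphic_on (UNIV - {0})"
  unfolding holomorphic_on_def field_differentiable_def using LPI_deriv by blast

lemma LPId_holo: "LPId I c holomorphic_on (UNIV - {0})"
  unfolding holomorphic_on_def field_differentiable_def using LPId_deriv by blast

lemma deriv_LPI: "x \<noteq> 0 \<Longrightarrow> deriv (LPI I c) x = LPId I c x"
  using LPI_deriv DERIV_imp_deriv by blast

lemma deriv_LPId: "x \<noteq> 0 \<Longrightarrow> deriv (LPId I c) x = LPIdd I c x"
  using LPId_deriv DERIV_imp_deriv by blast

lemma LPId_comp_deriv:
  assumes dC: "\<And>n. n \<in> I \<Longrightarrow> ((\<lambda>s. C s n) has_field_derivative dC n) (at 0)"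
    and dX: "(X has_field_derivative X') (at 0)" and X0: "X 0 \<noteq> 0"
  shows "((\<lambda>s. LPId I (C s) (X s)) has_field_derivative
            (LPId I dC (X 0) + LPIdd I (C 0) (X 0) * X')) (at 0)"
proof -
  have "((\<lambda>s. \<Sum>n\<in>I. C s n * of_int n * X s powi (n - 1)) has_field_derivative
      (\<Sum>n\<in>I. dC n * of_int n * X 0 powi (n - 1) + C 0 n * of_int n * of_int (n - 1) * X 0 powi (n - 2) * X')) (at 0)"
  proof (rule DERIV_sum)
    fix n assume n: "n \<in> I"
    have h1: "((\<lambda>s. X s powi (n - 1)) has_field_derivative (of_int (n - 1) * X 0 powi (n - 1 - 1) * X')) (at 0)"
      by (rule DERIV_power_int[OF dX]) (use X0 in auto)
    have "((\<lambda>s. C s n * of_int n * X s powi (n - 1)) has_field_derivative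
       (dC n * of_int n + C 0 n * 0) * X 0 powi (n - 1) + C 0 n * of_int n * (of_int (n - 1) * X 0 powi (n - 1 - 1) * X')) (at 0)"
      using DERIV_mult[OF DERIV_mult[OF dC[OF n] DERIV_const[of "of_int n"]] h1] by (simp add: mult.commute)
    then show "((\<lambda>s. C s n * of_int n * X s powi (n - 1)) has_field_derivative
       dC n * of_int n * X 0 powi (n - 1) + C 0 n * of_int n * of_int (n - 1) * X 0 powi (n - 2) * X') (at 0)"
      by (simp add: algebra_simps)
  qed
  moreover have "(\<Sum>n\<in>I. dC n * of_int n * X 0 powi (n - 1) + C 0 n * of_int n * of_int (n - 1) * X 0 powi (n - 2) * X')
     = LPId I dC (X 0) + LPIdd I (C 0) (X 0) * X'"
    unfolding LPId_def LPIdd_def by (simp add: sum.distrib sum_distrib_right)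
  ultimately show ?thesis unfolding LPId_def by simp
qed

lemma LPI_poly:
  assumes x: "x \<noteq> 0" and I: "\<And>n. n \<in> I \<Longrightarrow> n \<ge> - int M"
  shows "LPI I c x = poly (\<Sum>n\<in>I. monom (c n) (nat (n + int M))) x / x ^ M"
proof -
  have "c n * x powi n = poly (monom (c n) (nat (n + int M))) x / x ^ M" if "n \<in> I" for n
  proof -
    have nn: "int (nat (n + int M)) = n + int M" using I[OF that] by simp
    have "x ^ nat (n + int M) = x powi (int (nat (n + int M)))" by (simp only: power_int_of_nat)
    also have "\<dots> = x powi (n + int M)" by (simp only: nn)
    finally have "x ^ nat (n + int M) = x powi (n + int M)" .
    also have "\<dots> = x powi n * x ^ M" using x by (simp add: power_int_add)
    finally show ?thesis using x by (simp add: poly_monom field_simps)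
  qed
  then show ?thesis unfolding LPI_def poly_sum by (simp add: sum_divide_distrib)
qed

lemma IMPL_LP:
  assumes dC: "\<And>n. n \<in> I \<Longrightarrow> ((\<lambda>s. C s n) has_field_derivative dC n) (at 0)"
    and cX: "isCont X 0" and X0: "X 0 \<noteq> 0"
    and ev: "eventually (\<lambda>s. LPI I (C s) (X s) = LPI I (C 0) (X 0)) (at 0)"
    and b: "LPId I (C 0) (X 0) \<noteq> 0"
  shows "(X has_field_derivative (- LPI I dC (X 0) / LPId I (C 0) (X 0))) (at 0)"
proof -
  define x0 where "x0 = X 0"
  define bb where "bb = LPId I (C 0) x0"
  define a where "a = LPI I dC x0"
  have "(LPI I (C 0) has_field_derivative bb) (at x0)" unfolding bb_def by (rule LPI_deriv) (use X0 x0_def in auto)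
  then obtain phi where phi: "\<And>z. LPI I (C 0) z - LPI I (C 0) x0 = phi z * (z - x0)" "isCont phi x0" "phi x0 = bb"
    unfolding CARAT_DERIV by blast
  define K where "K = (\<lambda>s. \<Sum>n\<in>I. ((C s n - C 0 n) / s) * X s powi n)"
  have Xt: "(X \<longlongrightarrow> x0) (at 0)" using cX unfolding isCont_def x0_def .
  have tK: "(K \<longlongrightarrow> a) (at 0)"
    unfolding K_def a_def LPI_def
  proof (rule tendsto_sum)
    fix n assume n: "n \<in> I"
    have "((\<lambda>s. (C s n - C 0 n) / (s - 0)) \<longlongrightarrow> dC n) (at 0)"
      using dC[OF n] unfolding has_field_derivative_iff .
    moreover have "((\<lambda>s. X s powi n) \<longlongrightarrow> x0 powi n) (at 0)"
      by (rule tendsto_power_int[OF Xt]) (use X0 x0_def in auto)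
    ultimately show "((\<lambda>s. (C s n - C 0 n) / s * X s powi n) \<longlongrightarrow> dC n * x0 powi n) (at 0)"
      using tendsto_mult by fastforce
  qed
  have tphi: "((\<lambda>s. phi (X s)) \<longlongrightarrow> bb) (at 0)"
    using isCont_tendsto_compose[OF phi(2) Xt] phi(3) by simp
  have bb0: "bb \<noteq> 0" using b by (simp add: bb_def x0_def)
  have evphi: "eventually (\<lambda>s. phi (X s) \<noteq> 0) (at 0)"
    using tendsto_imp_eventually_ne[OF tphi bb0] .
  have evs: "eventually (\<lambda>s. s \<noteq> 0) (at (0::complex))" by (simp add: eventually_at_filter)
  have eq: "eventually (\<lambda>s. - K s / phi (X s) = (X s - X 0) / (s - 0)) (at 0)"
    using ev evphi evs
  proof eventually_elim
    case (elim s)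
    have sK: "s * K s = (\<Sum>n\<in>I. (C s n - C 0 n) * X s powi n)"
      unfolding K_def sum_distrib_left using elim(3) by (intro sum.cong) (auto simp: field_simps)
    have d1: "LPI I (C s) (X s) - LPI I (C 0) (X s) = s * K s"
      unfolding sK LPI_def by (simp add: sum_subtractf[symmetric] algebra_simps)
    have "0 = LPI I (C s) (X s) - LPI I (C 0) x0" using elim(1) by (simp add: x0_def)
    also have "\<dots> = s * K s + phi (X s) * (X s - x0)" using d1 phi(1)[of "X s"] by (simp add: algebra_simps)
    finally have "s * K s + phi (X s) * (X s - x0) = 0" by simp
    then show ?case using elim(2,3) unfolding x0_def by (simp add: field_simps add_eq_0_iff)
  qed
  have "((\<lambda>s. - K s / phi (X s)) \<longlongrightarrow> - a / bb) (at 0)"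
    by (intro tendsto_intros tK tphi bb0)
  then have "((\<lambda>s. (X s - X 0) / (s - 0)) \<longlongrightarrow> - a / bb) (at 0)"
    using Lim_transform_eventually eq by fast
  then show ?thesis unfolding has_field_derivative_iff a_def bb_def x0_def .
qed

lemma IMPL_exp:
  fixes X L :: "complex \<Rightarrow> complex"
  assumes dX: "(X has_field_derivative X') (at 0)" and cL: "isCont L 0"
    and ev: "eventually (\<lambda>s. exp (L s) = X s) (nhds 0)"
  shows "(L has_field_derivative X' / X 0) (at 0)"
proof -
  have eL0: "exp (L 0) = X 0" using eventually_nhds_x_imp_x[OF ev] .
  have "(exp has_field_derivative exp (L 0)) (at (L 0))" by (rule DERIV_exp)
  then obtain phi where phi: "\<And>z. exp z - exp (L 0) = phi z * (z - L 0)" "isCont phi (L 0)" "phi (L 0) = exp (L 0)"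
    unfolding CARAT_DERIV by blast
  have Lt: "(L \<longlongrightarrow> L 0) (at 0)" using cL unfolding isCont_def .
  have tphi: "((\<lambda>s. phi (L s)) \<longlongrightarrow> X 0) (at 0)"
    using isCont_tendsto_compose[OF phi(2) Lt] phi(3) eL0 by simp
  have X00: "X 0 \<noteq> 0" using eL0 by (metis exp_not_eq_zero)
  have evphi: "eventually (\<lambda>s. phi (L s) \<noteq> 0) (at 0)"
    using tendsto_imp_eventually_ne[OF tphi X00] .
  have ev': "eventually (\<lambda>s. exp (L s) = X s) (at 0)"
    using ev by (simp add: eventually_at_filter eventually_mono)
  have evs: "eventually (\<lambda>s. s \<noteq> 0) (at (0::complex))" by (simp add: eventually_at_filter)
  have eq: "eventually (\<lambda>s. ((X s - X 0) / (s - 0)) / phi (L s) = (L s - L 0) / (s - 0)) (at 0)"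
    using ev' evphi evs
  proof eventually_elim
    case (elim s)
    have h: "X s - X 0 = phi (L s) * (L s - L 0)" using phi(1)[of "L s"] elim(1) eL0 by simp
    show ?case by (simp only: h) (use elim(2,3) in \<open>simp add: field_simps\<close>)
  qed
  have "((\<lambda>s. (X s - X 0) / (s - 0)) \<longlongrightarrow> X') (at 0)"
    using dX unfolding has_field_derivative_iff .
  then have "((\<lambda>s. ((X s - X 0) / (s - 0)) / phi (L s)) \<longlongrightarrow> X' / X 0) (at 0)"
    by (intro tendsto_intros tphi X00)
  then have "((\<lambda>s. (L s - L 0) / (s - 0)) \<longlongrightarrow> X' / X 0) (at 0)"
    using Lim_transform_eventually eq by fast
  then show ?thesis unfolding has_field_derivative_iff .
qed

definition II :: "nat \<Rightarrow> nat \<Rightarrow> int set" where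
  "II k m = {- int m..int k}"

definition cf :: "nat \<Rightarrow> nat \<Rightarrow> complex \<Rightarrow> (nat \<Rightarrow> complex) \<Rightarrow> int \<Rightarrow> complex" where
  "cf k m Q t' n = (if n = int k then 1
     else if 0 \<le> n \<and> n < int k then t' (nat (int k - n))
     else if - int m < n \<and> n < 0 then t' (nat (int k - n)) * (Q * exp (t' (k+m))) ^ nat (- n)
     else if n = - int m then (Q * exp (t' (k+m))) ^ m else 0)"

definition dcf :: "nat \<Rightarrow> nat \<Rightarrow> complex \<Rightarrow> (nat \<Rightarrow> complex) \<Rightarrow> (nat \<Rightarrow> complex) \<Rightarrow> int \<Rightarrow> complex" where
  "dcf k m Q t v n = (if n = int k then 0
     else if 0 \<le> n \<and> n < int k then v (nat (int k - n))
     else if - int m < n \<and> n < 0 then v (nat (int k - n)) * (Q * exp (t (k+m))) ^ nat (- n)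
            + t (nat (int k - n)) * (of_nat (nat (- n)) * (Q * exp (t (k+m))) ^ nat (- n) * v (k+m))
     else if n = - int m then of_nat m * (Q * exp (t (k+m))) ^ m * v (k+m) else 0)"

lemma II_split:
  assumes "k \<ge> 1" "m \<ge> 1"
  shows "II k m = {int k} \<union> ((\<lambda>i. int k - int i) ` {1..k}) \<union> ((\<lambda>j. - int j) ` {1..m-1}) \<union> {- int m}"
proof (rule set_eqI)
  fix n :: int
  show "n \<in> II k m \<longleftrightarrow> n \<in> {int k} \<union> ((\<lambda>i. int k - int i) ` {1..k}) \<union> ((\<lambda>j. - int j) ` {1..m-1}) \<union> {- int m}"
  proof
    assume n: "n \<in> II k m"
    show "n \<in> {int k} \<union> ((\<lambda>i. int k - int i) ` {1..k}) \<union> ((\<lambda>j. - int j) ` {1..m-1}) \<union> {- int m}"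
    proof (cases "n = int k \<or> n = - int m")
      case True then show ?thesis by auto
    next
      case False
      show ?thesis
      proof (cases "n \<ge> 0")
        case True
        then have "n \<in> (\<lambda>i. int k - int i) ` {1..k}"
          using n False by (intro image_eqI[of _ _ "nat (int k - n)"]) (auto simp: II_def)
        then show ?thesis by blast
      next
        case f2: False
        then have "n \<in> (\<lambda>j. - int j) ` {1..m-1}"
          using n False by (intro image_eqI[of _ _ "nat (- n)"]) (auto simp: II_def)
        then show ?thesis by blast
      qed
    qed
  next
    assume "n \<in> {int k} \<union> ((\<lambda>i. int k - int i) ` {1..k}) \<union> ((\<lambda>j. - int j) ` {1..m-1}) \<union> {- int m}"
    then show "n \<in> II k m" using assms by (auto simp: II_def)
  qed
qed

lemma fL_LP:
  assumes k: "k \<ge> 1" and m: "m \<ge> 1" and x: "x \<noteq> 0"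
  shows "fL k m Q t' x = LPI (II k m) (cf k m Q t') x"
proof -
  define q where "q = Q * exp (t' (k+m))"
  define g where "g = (\<lambda>n. cf k m Q t' n * x powi n)"
  define A where "A = (\<lambda>i. int k - int i) ` {1..k}"
  define B where "B = (\<lambda>j. - int j) ` {1..m-1}"
  have fin: "finite A" "finite B" by (auto simp: A_def B_def)
  have d1: "{int k} \<inter> A = {}" by (auto simp: A_def)
  have d2: "({int k} \<union> A) \<inter> B = {}" using k by (auto simp: A_def B_def)
  have d3: "({int k} \<union> A \<union> B) \<inter> {- int m} = {}" using k m by (auto simp: A_def B_def)
  have "LPI (II k m) (cf k m Q t') x = sum g ({int k} \<union> A \<union> B \<union> {- int m})"
    unfolding LPI_def g_def II_split[OF k m] A_def B_def ..
  also have "\<dots> = g (int k) + sum g A + sum g B + g (- int m)"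
    using fin d1 d2 d3 by (simp add: sum.union_disjoint)
  also have "g (int k) = x ^ k" by (simp add: g_def cf_def power_int_of_nat)
  also have "sum g A = (\<Sum>i=1..k. t' i * x ^ (k - i))"
    unfolding A_def
  proof (subst sum.reindex)
    show "inj_on (\<lambda>i. int k - int i) {1..k}" by (auto simp: inj_on_def)
    show "sum (g \<circ> (\<lambda>i. int k - int i)) {1..k} = (\<Sum>i = 1..k. t' i * x ^ (k - i))"
    proof (rule sum.cong)
      fix i assume i: "i \<in> {1..k}"
      have e: "int k - int i = int (k - i)" using i by simp
      have "x powi (int k - int i) = x ^ (k - i)" by (simp only: e power_int_of_nat)
      then show "(g \<circ> (\<lambda>i. int k - int i)) i = t' i * x ^ (k - i)"
        using i by (simp add: g_def cf_def)
    qed simp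
  qed
  also have "sum g B = (\<Sum>j=1..m-1. t' (k + j) * (Q * exp (t' (k + m)) / x) ^ j)"
    unfolding B_def
  proof (subst sum.reindex)
    show "inj_on (\<lambda>j. - int j) {1..m-1}" by (auto simp: inj_on_def)
    show "sum (g \<circ> (\<lambda>j. - int j)) {1..m-1} = (\<Sum>j=1..m-1. t' (k + j) * (Q * exp (t' (k + m)) / x) ^ j)"
    proof (rule sum.cong)
      fix j assume j: "j \<in> {1..m-1}"
      have "x powi (- int j) = 1 / x ^ j" by (simp add: power_int_minus power_int_of_nat field_simps)
      moreover have "nat (int k + int j) = k + j" by simp
      moreover have "j < m" "j \<noteq> m" using j m by auto
      ultimately show "(g \<circ> (\<lambda>j. - int j)) j = t' (k + j) * (Q * exp (t' (k + m)) / x) ^ j"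
        using j by (simp add: g_def cf_def power_divide)
    qed simp
  qed
  also have "g (- int m) = (Q * exp (t' (k + m)) / x) ^ m"
  proof -
    have "x powi (- int m) = 1 / x ^ m" by (simp add: power_int_minus power_int_of_nat field_simps)
    then show ?thesis using k m by (simp add: g_def cf_def power_divide)
  qed
  finally show ?thesis unfolding fL_def by simp
qed

lemma exp_pow_deriv:
  "((\<lambda>s::complex. (Q * exp (a + s * b)) ^ j) has_field_derivative (of_nat j * (Q * exp a) ^ j * b)) (at 0)"
proof -
  have D: "((\<lambda>s::complex. (Q * exp (a + s * b)) ^ j) has_field_derivative
      (of_nat j * (Q * exp a) ^ (j - 1) * (Q * exp a * b))) (at 0)"
    by (auto intro!: derivative_eq_intros)
  have eq: "of_nat j * (Q * exp a) ^ (j - 1) * (Q * exp a * b) = of_nat j * (Q * exp a) ^ j * b"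
    by (cases j) (simp_all add: algebra_simps)
  show ?thesis using D by (simp only: eq)
qed

lemma cf_deriv:
  assumes m: "m \<ge> 1"
  shows "((\<lambda>s. cf k m Q (shiftp t s v) n) has_field_derivative dcf k m Q t v n) (at 0)"
proof -
  consider (a) "n = int k" | (b) "n \<noteq> int k" "0 \<le> n \<and> n < int k"
    | (c) "n \<noteq> int k" "\<not> (0 \<le> n \<and> n < int k)" "- int m < n \<and> n < 0"
    | (d) "n \<noteq> int k" "\<not> (0 \<le> n \<and> n < int k)" "\<not> (- int m < n \<and> n < 0)" "n = - int m"
    | (e) "n \<noteq> int k" "\<not> (0 \<le> n \<and> n < int k)" "\<not> (- int m < n \<and> n < 0)" "n \<noteq> - int m"
    by blast
  then show ?thesis
  proof cases
    case a then show ?thesis by (simp add: cf_def dcf_def)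
  next
    case b
    have "(\<lambda>s. cf k m Q (shiftp t s v) n) = (\<lambda>s. t (nat (int k - n)) + s * v (nat (int k - n)))"
      using b by (simp add: cf_def shiftp_def)
    moreover have "((\<lambda>s. t (nat (int k - n)) + s * v (nat (int k - n))) has_field_derivative v (nat (int k - n))) (at 0)"
      by (auto intro!: derivative_eq_intros)
    ultimately show ?thesis using b by (simp add: dcf_def)
  next
    case c
    define i where "i = nat (int k - n)"
    define j where "j = nat (- n)"
    have "(\<lambda>s. cf k m Q (shiftp t s v) n) = (\<lambda>s. (t i + s * v i) * (Q * exp (t (k+m) + s * v (k+m))) ^ j)"
      using c by (simp add: cf_def shiftp_def i_def j_def)
    moreover have "((\<lambda>s. (t i + s * v i) * (Q * exp (t (k+m) + s * v (k+m))) ^ j) has_field_derivative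
        (v i * (Q * exp (t (k+m))) ^ j + t i * (of_nat j * (Q * exp (t (k+m))) ^ j * v (k+m)))) (at 0)"
    proof -
      have d1: "((\<lambda>s. t i + s * v i) has_field_derivative v i) (at 0)"
        by (auto intro!: derivative_eq_intros)
      from DERIV_mult[OF d1 exp_pow_deriv[of Q "t (k+m)" "v (k+m)" j]] show ?thesis by (simp add: ac_simps)
    qed
    ultimately show ?thesis using c by (simp add: dcf_def i_def j_def)
  next
    case d
    have "(\<lambda>s. cf k m Q (shiftp t s v) n) = (\<lambda>s. (Q * exp (t (k+m) + s * v (k+m))) ^ m)"
      using d m by (intro ext) (simp add: cf_def shiftp_def)
    then show ?thesis using d m exp_pow_deriv[of Q "t (k+m)" "v (k+m)" m] by (simp add: dcf_def)
  next
    case e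
    have "(\<lambda>s. cf k m Q (shiftp t s v) n) = (\<lambda>s. 0)" using e by (intro ext) (auto simp: cf_def)
    moreover have "dcf k m Q t v n = 0" using e by (auto simp: dcf_def)
    ultimately show ?thesis by simp
  qed
qed

lemma dirf_LP:
  assumes k: "k \<ge> 1" and m: "m \<ge> 1" and x: "x \<noteq> 0"
  shows "dirf k m Q t v x = LPI (II k m) (dcf k m Q t v) x"
proof -
  have "(\<lambda>s. fL k m Q (shiftp t s v) x) = (\<lambda>s. \<Sum>n\<in>II k m. cf k m Q (shiftp t s v) n * x powi n)"
    using fL_LP[OF k m x] by (simp add: LPI_def)
  moreover have "((\<lambda>s. \<Sum>n\<in>II k m. cf k m Q (shiftp t s v) n * x powi n) has_field_derivative
       (\<Sum>n\<in>II k m. dcf k m Q t v n * x powi n)) (at 0)"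
  proof (rule DERIV_sum)
    fix n
    show "((\<lambda>s. cf k m Q (shiftp t s v) n * x powi n) has_field_derivative dcf k m Q t v n * x powi n) (at 0)"
      using DERIV_mult[OF cf_deriv[OF m] DERIV_const[of "x powi n"], of k Q t v n] by simp
  qed
  ultimately show ?thesis unfolding dirf_def Dir_def LPI_def by (simp add: DERIV_imp_deriv)
qed

lemma fprime_LP:
  assumes k: "k \<ge> 1" and m: "m \<ge> 1" and x: "x \<noteq> 0"
  shows "fprime k m Q t' x = LPId (II k m) (cf k m Q t') x"
proof -
  have "(fL k m Q t' has_field_derivative LPId (II k m) (cf k m Q t') x) (at x)"
  proof (rule has_field_derivative_transform_within_open[OF LPI_deriv[OF x]])
    show "open (UNIV - {0::complex})" by (simp add: open_delete)
  qed (use x fL_LP[OF k m] in auto)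
  then show ?thesis unfolding fprime_def by (rule DERIV_imp_deriv)
qed

lemma fL_holo:
  assumes k: "k \<ge> 1" and m: "m \<ge> 1"
  shows "fL k m Q t' holomorphic_on (UNIV - {0})"
  using LPI_holo by (rule holomorphic_transform) (use fL_LP[OF k m] in auto)

lemma fprime_holo:
  assumes k: "k \<ge> 1" and m: "m \<ge> 1"
  shows "fprime k m Q t' holomorphic_on (UNIV - {0})"
  using LPId_holo by (rule holomorphic_transform) (use fprime_LP[OF k m] in auto)

lemma dirf_holo:
  assumes k: "k \<ge> 1" and m: "m \<ge> 1"
  shows "dirf k m Q t v holomorphic_on (UNIV - {0})"
  using LPI_holo by (rule holomorphic_transform) (use dirf_LP[OF k m] in auto)

definition PL :: "nat \<Rightarrow> nat \<Rightarrow> (int \<Rightarrow> complex) \<Rightarrow> complex poly" where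
  "PL k m c = (\<Sum>n\<in>II k m. monom (c n) (nat (n + int m)))"

lemma LPI_PL: "x \<noteq> 0 \<Longrightarrow> LPI (II k m) c x = poly (PL k m c) x / x ^ m"
  unfolding PL_def by (rule LPI_poly) (auto simp: II_def)

lemma LPId_PL: "x \<noteq> 0 \<Longrightarrow> LPId (II k m) c x = poly (PL k m (\<lambda>n. c n * of_int n)) x / x ^ (m + 1)"
proof -
  assume x: "x \<noteq> 0"
  have "LPId (II k m) c x = LPI (II k m) (\<lambda>n. c n * of_int n) x / x"
    unfolding LPId_def LPI_def sum_divide_distrib
    by (intro sum.cong refl) (use x in \<open>simp add: power_int_diff\<close>)
  then show ?thesis using x by (simp add: LPI_PL)
qed

lemma coeff_PL: "coeff (PL k m c) j = (if j \<le> k + m then c (int j - int m) else 0)"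
proof -
  have "coeff (PL k m c) j = (\<Sum>n\<in>II k m. if n = int j - int m then c n else 0)"
    unfolding PL_def coeff_sum coeff_monom
    by (intro sum.cong refl) (auto simp: II_def)
  also have "\<dots> = (if int j - int m \<in> II k m then c (int j - int m) else 0)"
    by (rule sum.delta) (simp add: II_def)
  also have "(int j - int m \<in> II k m) = (j \<le> k + m)" by (auto simp: II_def)
  finally show ?thesis .
qed

definition FF :: "nat \<Rightarrow> nat \<Rightarrow> complex \<Rightarrow> (nat \<Rightarrow> complex) \<Rightarrow> complex poly" where
  "FF k m Q t = PL k m (\<lambda>n. cf k m Q t n * of_int n)"

definition PV :: "nat \<Rightarrow> nat \<Rightarrow> complex \<Rightarrow> (nat \<Rightarrow> complex) \<Rightarrow> (nat \<Rightarrow> complex) \<Rightarrow> complex poly" where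
  "PV k m Q t v = PL k m (dcf k m Q t v)"

lemma dirf_poly:
  assumes "k \<ge> 1" "m \<ge> 1" "x \<noteq> 0"
  shows "dirf k m Q t v x = poly (PV k m Q t v) x / x ^ m"
  using dirf_LP[OF assms] LPI_PL[OF assms(3)] by (simp add: PV_def)

lemma fprime_poly:
  assumes "k \<ge> 1" "m \<ge> 1" "x \<noteq> 0"
  shows "fprime k m Q t x = poly (FF k m Q t) x / x ^ (m + 1)"
  using fprime_LP[OF assms] LPId_PL[OF assms(3)] by (simp add: FF_def)

lemma degree_FF:
  assumes "k \<ge> 1" "m \<ge> 1"
  shows "degree (FF k m Q t) = k + m"
proof (rule antisym)
  show "degree (FF k m Q t) \<le> k + m"
    by (rule degree_le) (simp add: FF_def coeff_PL)
  have "coeff (FF k m Q t) (k + m) = of_nat k"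
    by (simp add: FF_def coeff_PL cf_def)
  then have "coeff (FF k m Q t) (k + m) \<noteq> 0" using assms by simp
  then show "k + m \<le> degree (FF k m Q t)" by (rule le_degree)
qed

lemma FF0:
  assumes "k \<ge> 1" "m \<ge> 1" "Q \<noteq> 0"
  shows "poly (FF k m Q t) 0 \<noteq> 0"
proof -
  have "poly (FF k m Q t) 0 = cf k m Q t (- int m) * of_int (- int m)"
    by (simp add: poly_0_coeff_0 FF_def coeff_PL)
  also have "cf k m Q t (- int m) = (Q * exp (t (k+m))) ^ m" using assms by (simp add: cf_def)
  finally show ?thesis using assms by simp
qed

lemma FF_nz:
  assumes "k \<ge> 1" "m \<ge> 1" "Q \<noteq> 0"
  shows "FF k m Q t \<noteq> 0"
proof
  assume "FF k m Q t = 0"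
  then have "poly (FF k m Q t) 0 = 0" by simp
  with FF0[OF assms, of t] show False by simp
qed

lemma degree_PV:
  assumes "k \<ge> 1" "m \<ge> 1"
  shows "degree (PV k m Q t v) < k + m"
proof -
  have "degree (PV k m Q t v) \<le> k + m - 1"
  proof (rule degree_le, intro allI impI)
    fix i assume "k + m - 1 < i"
    then show "coeff (PV k m Q t v) i = 0"
      using assms by (cases "i = k + m") (auto simp: PV_def coeff_PL dcf_def)
  qed
  then show ?thesis using assms by simp
qed

lemma PV_surj:
  assumes k: "k \<ge> 1" and m: "m \<ge> 1" and Q: "Q \<noteq> 0" and P: "degree P < k + m"
  shows "\<exists>v. tangent (k + m) v \<and> PV k m Q t v = P"
proof -
  define q where "q = Q * exp (t (k+m))"
  have q0: "q \<noteq> 0" using Q by (simp add: q_def)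
  define vN where "vN = coeff P 0 / (of_nat m * q ^ m)"
  define v where "v = (\<lambda>i. if 1 \<le> i \<and> i \<le> k then coeff P (k+m-i)
     else if k < i \<and> i < k+m then (coeff P (k+m-i) - t i * (of_nat (i-k) * q^(i-k) * vN)) / q^(i-k)
     else if i = k+m then vN else 0)"
  have vN: "v (k+m) = vN" using m by (simp add: v_def)
  have tan: "tangent (k + m) v" unfolding tangent_def v_def using k by auto
  have "PV k m Q t v = P"
  proof (rule poly_eqI)
    fix j
    show "coeff (PV k m Q t v) j = coeff P j"
    proof (cases "j \<le> k + m")
      case False
      then show ?thesis using P by (simp add: PV_def coeff_PL coeff_eq_0)
    next
      case True
      have cPV: "coeff (PV k m Q t v) j = dcf k m Q t v (int j - int m)"
        using True by (simp add: PV_def coeff_PL)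
      consider (a) "j = k + m" | (b) "m \<le> j" "j < k + m" | (c) "0 < j" "j < m" | (d) "j = 0"
        using True by linarith
      then show ?thesis
      proof cases
        case a
        then show ?thesis using cPV P by (simp add: dcf_def coeff_eq_0)
      next
        case b
        have i1: "nat (int k - (int j - int m)) = k + m - j" using b by simp
        have "dcf k m Q t v (int j - int m) = v (k + m - j)"
          using b by (simp add: dcf_def i1)
        also have "\<dots> = coeff P j"
        proof -
          have "1 \<le> k + m - j" "k + m - j \<le> k" "k + m - (k + m - j) = j" using b by auto
          then show ?thesis by (simp add: v_def)
        qed
        finally show ?thesis using cPV by simp
      next
        case c
        define i where "i = k + m - j"
        have i1: "nat (int k - (int j - int m)) = i" using c by (simp add: i_def)
        have i2: "nat (- (int j - int m)) = i - k" using c by (simp add: i_def)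
        have ik: "k < i" "i < k + m" "k + m - i = j" using c by (auto simp: i_def)
        have i3: "nat (int m - int j) = i - k" using c by (simp add: i_def)
        have i4: "(of_nat m - of_nat j :: complex) = of_nat (i - k)" using c by (simp add: i_def of_nat_diff)
        have "dcf k m Q t v (int j - int m) = v i * q ^ (i - k) + t i * (of_nat (i - k) * q ^ (i - k) * vN)"
          using c k by (simp add: dcf_def i1 i2 i3 i4 q_def vN)
        also have "\<dots> = coeff P j"
          using ik q0 by (simp add: v_def field_simps)
        finally show ?thesis using cPV by simp
      next
        case d
        have "dcf k m Q t v (int j - int m) = of_nat m * q ^ m * vN"
          using d k m by (simp add: dcf_def q_def vN)
        also have "\<dots> = coeff P j" using d m q0 by (simp add: vN_def)
        finally show ?thesis using cPV by simp
      qed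
    qed
  qed
  then show ?thesis using tan by blast
qed

lemma Rf_diff:
  assumes g1: "goodf h1" and g2: "goodf h2"
  shows "Rf (\<lambda>x. h1 x - h2 x) = Rf h1 - Rf h2"
proof -
  have "Rf (\<lambda>x. h1 x - h2 x) = Rf (\<lambda>x. h1 x + (\<lambda>x. (-1) * h2 x) x)" by simp
  also have "\<dots> = Rf h1 + Rf (\<lambda>x. (-1) * h2 x)" by (rule Rf_add[OF g1 goodf_cmult[OF g2]])
  also have "Rf (\<lambda>x. (-1) * h2 x) = - Rf h2" using Rf_cmult[OF g2, of "-1"] by simp
  finally show ?thesis by simp
qed

definition Den :: "nat \<Rightarrow> nat \<Rightarrow> complex \<Rightarrow> (nat \<Rightarrow> complex) \<Rightarrow> complex poly" where
  "Den k m Q t = monom 1 (m + 1) * FF k m Q t"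

definition Rp :: "nat \<Rightarrow> nat \<Rightarrow> complex \<Rightarrow> (nat \<Rightarrow> complex) \<Rightarrow> complex poly \<Rightarrow> complex" where
  "Rp k m Q t P = - Rf (\<lambda>x. poly P x / poly (Den k m Q t) x)"

lemma Den_nz:
  assumes "k \<ge> 1" "m \<ge> 1" "Q \<noteq> 0"
  shows "Den k m Q t \<noteq> 0"
  using FF_nz[OF assms] by (simp add: Den_def)

lemma pair_Rp:
  assumes k: "k \<ge> 1" and m: "m \<ge> 1"
  shows "pair k m Q t v w = Rp k m Q t (PV k m Q t v * PV k m Q t w)"
proof -
  have "Rf (\<lambda>x. dirf k m Q t v x * dirf k m Q t w x / (x ^ 2 * fprime k m Q t x))
      = Rf (\<lambda>x. poly (PV k m Q t v * PV k m Q t w) x / poly (Den k m Q t) x)"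
  proof (rule Rf_cong[of "{0}"])
    fix x :: complex assume "x \<notin> {0}"
    then have x: "x \<noteq> 0" by simp
    show "dirf k m Q t v x * dirf k m Q t w x / (x ^ 2 * fprime k m Q t x)
      = poly (PV k m Q t v * PV k m Q t w) x / poly (Den k m Q t) x"
      using x unfolding dirf_poly[OF k m x] fprime_poly[OF k m x] Den_def
      by (cases "poly (FF k m Q t) x = 0") (simp_all add: poly_monom field_simps power_add power2_eq_square)
  qed simp
  then show ?thesis unfolding pair_def Rp_def Let_def residue_inf_def Rf_def by simp
qed

lemma Rp_add:
  assumes "k \<ge> 1" "m \<ge> 1" "Q \<noteq> 0"
  shows "Rp k m Q t (P1 + P2) = Rp k m Q t P1 + Rp k m Q t P2"
proof -
  have "Rf (\<lambda>x. poly (P1 + P2) x / poly (Den k m Q t) x) =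
        Rf (\<lambda>x. poly P1 x / poly (Den k m Q t) x + poly P2 x / poly (Den k m Q t) x)"
    by (simp add: add_divide_distrib)
  also have "\<dots> = Rf (\<lambda>x. poly P1 x / poly (Den k m Q t) x) + Rf (\<lambda>x. poly P2 x / poly (Den k m Q t) x)"
    by (rule Rf_add) (intro goodf_rat Den_nz assms)+
  finally show ?thesis by (simp add: Rp_def)
qed

lemma Rp_diff:
  assumes "k \<ge> 1" "m \<ge> 1" "Q \<noteq> 0"
  shows "Rp k m Q t (P1 - P2) = Rp k m Q t P1 - Rp k m Q t P2"
proof -
  have "Rf (\<lambda>x. poly (P1 - P2) x / poly (Den k m Q t) x) =
        Rf (\<lambda>x. poly P1 x / poly (Den k m Q t) x - poly P2 x / poly (Den k m Q t) x)"
    by (simp add: diff_divide_distrib)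
  also have "\<dots> = Rf (\<lambda>x. poly P1 x / poly (Den k m Q t) x) - Rf (\<lambda>x. poly P2 x / poly (Den k m Q t) x)"
    by (rule Rf_diff) (intro goodf_rat Den_nz assms)+
  finally show ?thesis by (simp add: Rp_def)
qed

definition EE :: "nat \<Rightarrow> nat \<Rightarrow> complex \<Rightarrow> (nat \<Rightarrow> complex) \<Rightarrow> complex \<Rightarrow> complex poly" where
  "EE k m Q t c = smult (1 / fprime k m Q t c)
     ((FF k m Q t - smult (fprime k m Q t c) (monom 1 (m + 1))) div [:-c, 1:])"

lemma EE_props:
  assumes k: "k \<ge> 1" and m: "m \<ge> 1" and c: "c \<noteq> 0" and fc: "fprime k m Q t c \<noteq> 0"
  shows "\<And>x. poly (EE k m Q t c) x * (x - c) * fprime k m Q t c = poly (FF k m Q t) x - fprime k m Q t c * x ^ (m + 1)"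
    and "degree (EE k m Q t c) < k + m"
proof -
  define fc' where "fc' = fprime k m Q t c"
  define Nc where "Nc = FF k m Q t - smult fc' (monom 1 (m + 1))"
  define Qc where "Qc = Nc div [:-c, 1:]"
  have "poly (FF k m Q t) c = c ^ (m + 1) * fc'"
    using fprime_poly[OF k m c, of Q t] c by (simp add: fc'_def field_simps)
  then have "poly Nc c = 0" by (simp add: Nc_def poly_monom)
  then have "[:-c, 1:] dvd Nc" by (simp add: poly_eq_0_iff_dvd)
  then have NQ: "Nc = [:-c, 1:] * Qc" unfolding Qc_def by (rule dvd_mult_div_cancel[symmetric])
  have EEq: "EE k m Q t c = smult (1 / fc') Qc" by (simp add: EE_def fc'_def Nc_def Qc_def)
  show "poly (EE k m Q t c) x * (x - c) * fprime k m Q t c = poly (FF k m Q t) x - fprime k m Q t c * x ^ (m + 1)" for x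
  proof -
    have fc0: "fc' \<noteq> 0" using fc by (simp add: fc'_def)
    have "poly (EE k m Q t c) x * (x - c) * fc' = (x - c) * poly Qc x" unfolding EEq using fc0 by simp
    also have "\<dots> = poly Nc x" by (subst NQ) (simp add: algebra_simps)
    also have "\<dots> = poly (FF k m Q t) x - fc' * x ^ (m + 1)" by (simp add: Nc_def poly_monom)
    finally show ?thesis by (simp add: fc'_def)
  qed
  have dN: "degree Nc \<le> k + m"
    unfolding Nc_def using degree_FF[OF k m, of Q t] m k
    by (intro degree_diff_le) (auto simp: degree_monom_eq)
  have "degree Qc < k + m"
  proof (cases "Qc = 0")
    case True then show ?thesis using k by simp
  next
    case False
    then have "degree Nc = 1 + degree Qc" unfolding NQ by (subst degree_mult_eq) auto
    then show ?thesis using dN by simp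
  qed
  then show "degree (EE k m Q t c) < k + m" unfolding EEq using k by simp
qed

lemma alg1:
  fixes x d f F P y :: complex
  assumes "x \<noteq> 0" "d \<noteq> 0" "F \<noteq> 0" "f \<noteq> 0" "y \<noteq> 0"
  shows "((F - f*(x*y))/(d*f)) * P / (x*y*F) = P/(f*(x*y))/d - P/(d*F)"
  using assms by (simp add: field_simps)

lemma EE_val:
  assumes k: "k \<ge> 1" and m: "m \<ge> 1" and c: "c \<noteq> 0" and fc: "fprime k m Q t c \<noteq> 0" and x: "x \<noteq> c"
  shows "poly (EE k m Q t c) x = (poly (FF k m Q t) x - fprime k m Q t c * x ^ (m + 1)) / ((x - c) * fprime k m Q t c)"
  using EE_props(1)[OF k m c fc, of x] x fc by (simp add: field_simps)

lemma finite_roots_FF: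
  assumes "k \<ge> 1" "m \<ge> 1" "Q \<noteq> 0"
  shows "finite {x. poly (FF k m Q t) x = 0}"
  using poly_roots_finite[OF FF_nz[OF assms]] .

lemma Rp_E:
  assumes k: "k \<ge> 1" and m: "m \<ge> 1" and Q: "Q \<noteq> 0" and c: "c \<noteq> 0"
    and fc: "fprime k m Q t c \<noteq> 0" and P: "degree P < k + m"
  shows "Rp k m Q t (EE k m Q t c * P) = poly P c / (c ^ (m + 1) * fprime k m Q t c)"
proof -
  define f where "f = fprime k m Q t c"
  define F where "F = FF k m Q t"
  define phi where "phi = (\<lambda>x. poly P x / (f * x ^ (m + 1)))"
  define h1 where "h1 = (\<lambda>x. phi x / (x - c))"
  define h2 where "h2 = (\<lambda>x. poly P x / poly ([:-c, 1:] * F) x)"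
  have F0: "F \<noteq> 0" using FF_nz[OF k m Q] by (simp add: F_def)
  have phiholo: "phi holomorphic_on (UNIV - {0})" unfolding phi_def by (intro holomorphic_intros) (use fc f_def in auto)
  have g1: "goodf h1" unfolding goodf_def h1_def
    by (intro exI[of _ "{0, c}"] conjI holomorphic_intros holomorphic_on_subset[OF phiholo]) auto
  have nz1: "[:-c, 1:] \<noteq> 0" by simp
  have nz2: "[:-c, 1:] * F \<noteq> 0" using F0 nz1 by (simp only: mult_eq_0_iff) simp
  have g2: "goodf h2" unfolding h2_def by (rule goodf_rat[OF nz2])
  have "Rf (\<lambda>x. poly (EE k m Q t c * P) x / poly (Den k m Q t) x) = Rf (\<lambda>x. h1 x - h2 x)"
  proof (rule Rf_cong[of "{0, c} \<union> {x. poly F x = 0}"])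
    show "finite ({0, c} \<union> {x. poly F x = 0})" using finite_roots_FF[OF k m Q] by (simp add: F_def)
    fix x assume "x \<notin> {0, c} \<union> {x. poly F x = 0}"
    then have x0: "x \<noteq> 0" and xc: "x \<noteq> c" and Fx: "poly F x \<noteq> 0" by auto
    have d0: "x - c \<noteq> 0" using xc by simp
    have f0: "f \<noteq> 0" using fc by (simp add: f_def)
    have p1: "poly [:-c, 1:] x = x - c" by simp
    have "poly (EE k m Q t c * P) x / poly (Den k m Q t) x =
        ((poly F x - f * (x * x ^ m)) / ((x - c) * f)) * poly P x / (x * x ^ m * poly F x)"
      unfolding Den_def poly_mult EE_val[OF k m c fc xc] F_def[symmetric] f_def[symmetric] poly_monom
      by simp
    also have "\<dots> = poly P x / (f * (x * x ^ m)) / (x - c) - poly P x / ((x - c) * poly F x)"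
      by (rule alg1) (use x0 d0 Fx f0 in auto)
    also have "\<dots> = h1 x - h2 x" unfolding h1_def h2_def phi_def poly_mult p1 by simp
    finally show "poly (EE k m Q t c * P) x / poly (Den k m Q t) x = h1 x - h2 x" .
  qed
  also have "\<dots> = Rf h1 - Rf h2" by (rule Rf_diff[OF g1 g2])
  also have "Rf h1 = - phi c" unfolding h1_def by (rule Rf_pole1[OF c phiholo])
  also have "Rf h2 = 0" unfolding h2_def
  proof (rule Rf_Z)
    show "poly ([:- c, 1:] * F) 0 \<noteq> 0" using c FF0[OF k m Q] by (simp add: F_def)
    have nz: "[:- c, 1:] \<noteq> 0" by simp
    have "degree ([:- c, 1:] * F) = 1 + (k + m)" using degree_mult_eq[OF nz F0] degree_FF[OF k m, of Q t] by (simp add: F_def)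
    then show "degree P + 2 \<le> degree ([:- c, 1:] * F)" using P by simp
  qed
  finally show ?thesis unfolding Rp_def phi_def f_def by (simp add: mult.commute)
qed

lemma ND:
  assumes k: "k \<ge> 1" and m: "m \<ge> 1" and Q: "Q \<noteq> 0" and dPhi: "degree Phi < k + m"
    and orth: "\<And>P. degree P < k + m \<Longrightarrow> Rp k m Q t (Phi * P) = 0"
  shows "Phi = 0"
proof (rule ccontr)
  assume nz: "Phi \<noteq> 0"
  have "UNIV - ({0} \<union> {x. poly (FF k m Q t) x = 0}) \<subseteq> {x. poly Phi x = 0}"
  proof
    fix c assume "c \<in> UNIV - ({0} \<union> {x. poly (FF k m Q t) x = 0})"
    then have c: "c \<noteq> 0" and Fc: "poly (FF k m Q t) c \<noteq> 0" by auto
    have fc: "fprime k m Q t c \<noteq> 0" using Fc c by (simp add: fprime_poly[OF k m c])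
    have "Rp k m Q t (EE k m Q t c * Phi) = poly Phi c / (c ^ (m + 1) * fprime k m Q t c)"
      by (rule Rp_E[OF k m Q c fc dPhi])
    moreover have "Rp k m Q t (EE k m Q t c * Phi) = 0"
      using orth[OF EE_props(2)[OF k m c fc]] by (simp add: mult.commute)
    ultimately show "c \<in> {x. poly Phi x = 0}" using c fc by simp
  qed
  moreover have "finite {x. poly Phi x = 0}" using poly_roots_finite[OF nz] .
  ultimately have "finite (UNIV - ({0} \<union> {x. poly (FF k m Q t) x = 0}))" by (rule finite_subset)
  then have "finite (UNIV :: complex set)"
    using finite_roots_FF[OF k m Q] by (metis finite_Diff2 finite_Un finite.insertI finite.emptyI insert_is_Un)
  then show False by (simp add: infinite_UNIV_char_0)
qed

lemma PA_eq:
  assumes k: "k \<ge> 1" and m: "m \<ge> 1" and Q: "Q \<noteq> 0" and a: "a \<noteq> 0"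
    and fa: "fprime k m Q t a \<noteq> 0"
    and hyp: "\<And>w. tangent (k + m) w \<Longrightarrow>
         Rp k m Q t (PV k m Q t A * PV k m Q t w) = poly (PV k m Q t w) a / (a ^ (m + 1) * fprime k m Q t a)"
  shows "PV k m Q t A = EE k m Q t a"
proof -
  define Phi where "Phi = PV k m Q t A - EE k m Q t a"
  have dPhi: "degree Phi < k + m"
  proof -
    have "degree (PV k m Q t A) \<le> k + m - 1" "degree (EE k m Q t a) \<le> k + m - 1"
      using degree_PV[OF k m, of Q t A] EE_props(2)[OF k m a fa] by auto
    then have "degree (PV k m Q t A - EE k m Q t a) \<le> k + m - 1" by (rule degree_diff_le)
    then show ?thesis using k by (simp add: Phi_def)
  qed
  have "Phi = 0"
  proof (rule ND[where t=t, OF k m Q dPhi])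
    fix P :: "complex poly" assume P: "degree P < k + m"
    obtain w where w: "tangent (k + m) w" "PV k m Q t w = P" using PV_surj[OF k m Q P] by blast
    have "Rp k m Q t (Phi * P) = Rp k m Q t (PV k m Q t A * P) - Rp k m Q t (EE k m Q t a * P)"
      unfolding Phi_def by (simp add: left_diff_distrib Rp_diff[OF k m Q])
    also have "\<dots> = 0" using hyp[OF w(1)] Rp_E[OF k m Q a fa P] w(2) by simp
    finally show "Rp k m Q t (Phi * P) = 0" .
  qed
  then show ?thesis by (simp add: Phi_def)
qed

lemma alg2:
  fixes x y z d1 d2 e fa fb Fx Pvx pgx :: complex
  assumes nz: "x \<noteq> 0" "y \<noteq> 0" "z \<noteq> 0" "d1 \<noteq> 0" "d2 \<noteq> 0" "fa \<noteq> 0" "fb \<noteq> 0" "Fx \<noteq> 0" "e \<noteq> 0"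
    and e: "e = d2 - d1"
  shows "((Fx - fa*(x*y))/(d1*fa)) * ((Pvx / y * (((Fx - fb*(x*y))/(d2*fb)) / y) + pgx / z * (Fx / (x*y))) * y) / (x*y*Fx)
     = ((Pvx / y * (Fx / (x*y)) / (fa*fb) - (fa+fb) * (Pvx / y) / (fa*fb)) / e) / d1
       + (- (Pvx / y * (Fx / (x*y)) / (fa*fb) - (fa+fb) * (Pvx / y) / (fa*fb)) / e) / d2
       + x * Pvx / (d1 * d2 * Fx)
       + ((Fx - fa*(x*y))/(d1*fa)) * pgx / (y * z * x * x)"
  using nz apply (simp add: field_simps)
  apply (simp add: e algebra_simps)
  done

lemma alg3:
  fixes x y z d1 fa Fx Pvx pgx :: complex
  assumes nz: "x \<noteq> 0" "y \<noteq> 0" "z \<noteq> 0" "d1 \<noteq> 0" "fa \<noteq> 0" "Fx \<noteq> 0"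
  shows "((Fx - fa*(x*y))/(d1*fa)) * ((Pvx / y * (((Fx - fa*(x*y))/(d1*fa)) / y) + pgx / z * (Fx / (x*y))) * y) / (x*y*Fx)
     = (Pvx / y * (Fx / (x*y)) / (fa*fa) - 2 * (Pvx / y) / fa) / d1^2
       + x * Pvx / (d1 * d1 * Fx)
       + ((Fx - fa*(x*y))/(d1*fa)) * pgx / (y * z * x * x)"
  using nz by (simp add: field_simps power2_eq_square)

lemma T3_zero:
  assumes k: "k \<ge> 1" and m: "m \<ge> 1" and Q: "Q \<noteq> 0" and a: "a \<noteq> 0" and b: "b \<noteq> 0"
  shows "Rf (\<lambda>x. poly (monom 1 1 * PV k m Q t v) x / poly ([:-a, 1:] * [:-b, 1:] * FF k m Q t) x) = 0"
proof (rule Rf_Z)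
  show "poly ([:-a, 1:] * [:-b, 1:] * FF k m Q t) 0 \<noteq> 0" using a b FF0[OF k m Q] by simp
  have F0: "FF k m Q t \<noteq> 0" using FF_nz[OF k m Q] .
  have nz: "[:-a, 1:] * [:-b, 1:] \<noteq> 0" by (simp only: mult_eq_0_iff) simp
  have "degree ([:-a, 1:] * [:-b, 1:] * FF k m Q t) = degree ([:-a, 1:] * [:-b, 1:]) + degree (FF k m Q t)"
    by (rule degree_mult_eq[OF nz F0])
  also have "degree ([:-a, 1:] * [:-b, 1:]) = 2" by (subst degree_mult_eq) auto
  finally have d1: "degree ([:-a, 1:] * [:-b, 1:] * FF k m Q t) = 2 + (k + m)" using degree_FF[OF k m] by simp
  have "degree (monom (1::complex) 1 * PV k m Q t v) \<le> degree (monom (1::complex) 1) + degree (PV k m Q t v)"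
    by (rule degree_mult_le)
  then have "degree (monom (1::complex) 1 * PV k m Q t v) \<le> k + m"
    using degree_PV[OF k m, of Q t v] by (simp add: degree_monom_eq)
  then show "degree (monom 1 1 * PV k m Q t v) + 2 \<le> degree ([:-a, 1:] * [:-b, 1:] * FF k m Q t)"
    using d1 by simp
qed

lemma final_ab:
  assumes k: "k \<ge> 1" and m: "m \<ge> 1" and Q: "Q \<noteq> 0" and a0: "a \<noteq> 0" and b0: "b \<noteq> 0" and ab: "a \<noteq> b"
    and fa: "fprime k m Q t a \<noteq> 0" and fb: "fprime k m Q t b \<noteq> 0"
    and PA: "PV k m Q t A = EE k m Q t a" and PB: "PV k m Q t B = EE k m Q t b"
    and prod: "\<And>x. x \<noteq> 0 \<Longrightarrow> dirf k m Q t u x - dirf k m Q t v x * dirf k m Q t B x = g x * fprime k m Q t x"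
    and lg: "laurent_poly g"
  shows "Rp k m Q t (PV k m Q t A * PV k m Q t u) =
           (dirf k m Q t v b / fprime k m Q t b - dirf k m Q t v a / fprime k m Q t a) / (a - b)"
proof -
  obtain pg n where g: "\<And>x. x \<noteq> 0 \<Longrightarrow> g x = poly pg x / x ^ n"
    using lg unfolding laurent_poly_def by blast
  define fa' where "fa' = fprime k m Q t a"
  define fb' where "fb' = fprime k m Q t b"
  define F where "F = FF k m Q t"
  define Dv where "Dv = dirf k m Q t v"
  define fp where "fp = fprime k m Q t"
  define phi where "phi = (\<lambda>x. Dv x * fp x / (fa' * fb') - (fa' + fb') * Dv x / (fa' * fb'))"
  define T1 where "T1 = (\<lambda>x. (phi x / (a - b)) / (x - a))"
  define T2 where "T2 = (\<lambda>x. (- phi x / (a - b)) / (x - b))"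
  define T3 where "T3 = (\<lambda>x. poly (monom 1 1 * PV k m Q t v) x / poly ([:-a, 1:] * [:-b, 1:] * F) x)"
  define T4 where "T4 = (\<lambda>x. poly (EE k m Q t a * pg) x / x ^ (m + n + 2))"
  have fa0: "fa' \<noteq> 0" "fb' \<noteq> 0" using fa fb by (auto simp: fa'_def fb'_def)
  have F0: "F \<noteq> 0" using FF_nz[OF k m Q] by (simp add: F_def)
  have Dvh: "Dv holomorphic_on (UNIV - {0})" unfolding Dv_def by (rule dirf_holo[OF k m])
  have fph: "fp holomorphic_on (UNIV - {0})" unfolding fp_def by (rule fprime_holo[OF k m])
  have phih: "phi holomorphic_on (UNIV - {0})" unfolding phi_def by (intro holomorphic_intros Dvh fph) (use fa0 in auto)
  have phih2: "(\<lambda>x. phi x / (a - b)) holomorphic_on (UNIV - {0})" by (intro holomorphic_intros phih) (use ab in auto)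
  have phih3: "(\<lambda>x. - phi x / (a - b)) holomorphic_on (UNIV - {0})" by (intro holomorphic_intros phih) (use ab in auto)
  have g1: "goodf T1" unfolding goodf_def T1_def
    by (intro exI[of _ "{0, a}"] conjI holomorphic_intros holomorphic_on_subset[OF phih2]) auto
  have g2: "goodf T2" unfolding goodf_def T2_def
    by (intro exI[of _ "{0, b}"] conjI holomorphic_intros holomorphic_on_subset[OF phih3]) auto
  have nz3: "[:-a, 1:] * [:-b, 1:] * F \<noteq> 0" using F0 by (simp only: mult_eq_0_iff) simp
  have g3: "goodf T3" unfolding T3_def by (rule goodf_rat[OF nz3])
  have T4h: "T4 holomorphic_on (UNIV - {0})" unfolding T4_def by (intro holomorphic_intros) auto
  have g4: "goodf T4" unfolding goodf_def using T4h by blast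
  have "Rf (\<lambda>x. poly (PV k m Q t A * PV k m Q t u) x / poly (Den k m Q t) x) = Rf (\<lambda>x. T1 x + T2 x + T3 x + T4 x)"
  proof (rule Rf_cong[of "{0, a, b} \<union> {x. poly F x = 0}"])
    show "finite ({0, a, b} \<union> {x. poly F x = 0})" using finite_roots_FF[OF k m Q] by (simp add: F_def)
    fix x assume "x \<notin> {0, a, b} \<union> {x. poly F x = 0}"
    then have x0: "x \<noteq> 0" and xa: "x \<noteq> a" and xb: "x \<noteq> b" and Fx: "poly F x \<noteq> 0" by auto
    define y where "y = x ^ m"
    define z where "z = x ^ n"
    have y0: "y \<noteq> 0" "z \<noteq> 0" using x0 by (auto simp: y_def z_def)
    have xm1: "x ^ (m + 1) = x * y" by (simp add: y_def)
    have eA: "poly (PV k m Q t A) x = (poly F x - fa' * (x * y)) / ((x - a) * fa')"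
      unfolding PA EE_val[OF k m a0 fa xa] F_def[symmetric] fa'_def[symmetric] xm1 ..
    have eB: "dirf k m Q t B x = ((poly F x - fb' * (x * y)) / ((x - b) * fb')) / y"
      unfolding dirf_poly[OF k m x0] PB EE_val[OF k m b0 fb xb] F_def[symmetric] fb'_def[symmetric] xm1 y_def ..
    have eDv: "Dv x = poly (PV k m Q t v) x / y" unfolding Dv_def y_def by (rule dirf_poly[OF k m x0])
    have efp: "fp x = poly F x / (x * y)" unfolding fp_def F_def xm1[symmetric] by (rule fprime_poly[OF k m x0])
    have eu: "dirf k m Q t u x = Dv x * dirf k m Q t B x + g x * fp x"
      using prod[OF x0] by (simp add: Dv_def fp_def algebra_simps)
    have eU: "poly (PV k m Q t u) x = (poly (PV k m Q t v) x / y * (((poly F x - fb' * (x * y)) / ((x - b) * fb')) / y)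
        + poly pg x / z * (poly F x / (x * y))) * y"
    proof -
      have "poly (PV k m Q t u) x = dirf k m Q t u x * y"
        using dirf_poly[OF k m x0, of Q t u] y0 by (simp add: y_def)
      then show ?thesis unfolding eu eB eDv efp g[OF x0] z_def[symmetric] by simp
    qed
    have eD: "poly (Den k m Q t) x = x * y * poly F x" by (simp add: Den_def poly_monom F_def y_def)
    have "poly (PV k m Q t A * PV k m Q t u) x / poly (Den k m Q t) x =
       ((poly F x - fa' * (x * y)) / ((x - a) * fa')) * ((poly (PV k m Q t v) x / y * (((poly F x - fb' * (x * y)) / ((x - b) * fb')) / y)
        + poly pg x / z * (poly F x / (x * y))) * y) / (x * y * poly F x)"
      unfolding poly_mult eA eU eD ..
    also have "\<dots> = ((poly (PV k m Q t v) x / y * (poly F x / (x*y)) / (fa'*fb') - (fa'+fb') * (poly (PV k m Q t v) x / y) / (fa'*fb')) / (a - b)) / (x - a)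
       + (- (poly (PV k m Q t v) x / y * (poly F x / (x*y)) / (fa'*fb') - (fa'+fb') * (poly (PV k m Q t v) x / y) / (fa'*fb')) / (a - b)) / (x - b)
       + x * poly (PV k m Q t v) x / ((x - a) * (x - b) * poly F x)
       + ((poly F x - fa'*(x*y))/((x - a)*fa')) * poly pg x / (y * z * x * x)"
      by (rule alg2) (use x0 y0 xa xb ab fa0 Fx in auto)
    also have "\<dots> = T1 x + T2 x + T3 x + T4 x"
    proof -
      have pw: "x ^ (m + n + 2) = y * z * x * x" by (simp add: y_def z_def power_add power2_eq_square)
      have p1: "poly [:-a, 1:] x = x - a" "poly [:-b, 1:] x = x - b" by simp_all
      have t1: "T1 x = ((poly (PV k m Q t v) x / y * (poly F x / (x*y)) / (fa'*fb') - (fa'+fb') * (poly (PV k m Q t v) x / y) / (fa'*fb')) / (a - b)) / (x - a)"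
        unfolding T1_def phi_def eDv efp ..
      have t2: "T2 x = (- (poly (PV k m Q t v) x / y * (poly F x / (x*y)) / (fa'*fb') - (fa'+fb') * (poly (PV k m Q t v) x / y) / (fa'*fb')) / (a - b)) / (x - b)"
        unfolding T2_def phi_def eDv efp ..
      have t3: "T3 x = x * poly (PV k m Q t v) x / ((x - a) * (x - b) * poly F x)"
        unfolding T3_def poly_mult p1 poly_monom by simp
      have t4: "T4 x = ((poly F x - fa'*(x*y))/((x - a)*fa')) * poly pg x / (y * z * x * x)"
        unfolding T4_def pw poly_mult PA[symmetric] eA ..
      show ?thesis unfolding t1 t2 t3 t4 ..
    qed
    finally show "poly (PV k m Q t A * PV k m Q t u) x / poly (Den k m Q t) x = T1 x + T2 x + T3 x + T4 x" .
  qed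
  also have "\<dots> = Rf T1 + Rf T2 + Rf T3 + Rf T4"
    using g1 g2 g3 g4 by (simp add: Rf_add goodf_add)
  also have "Rf T1 = - (phi a / (a - b))" unfolding T1_def by (rule Rf_pole1[OF a0 phih2])
  also have "Rf T2 = - (- phi b / (a - b))" unfolding T2_def by (rule Rf_pole1[OF b0 phih3])
  also have "Rf T3 = 0" unfolding T3_def F_def by (rule T3_zero[OF k m Q a0 b0])
  also have "Rf T4 = 0" by (rule Rf_holo0[OF T4h])
  finally have "Rp k m Q t (PV k m Q t A * PV k m Q t u) = phi a / (a - b) - phi b / (a - b)"
    unfolding Rp_def by simp
  also have "\<dots> = (Dv b / fb' - Dv a / fa') / (a - b)"
  proof -
    have pa: "phi a = - (Dv a / fa')" using fa0 unfolding phi_def fp_def fa'_def[symmetric] by (simp add: field_simps)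
    have pb: "phi b = - (Dv b / fb')" using fa0 unfolding phi_def fp_def fb'_def[symmetric] by (simp add: field_simps)
    show ?thesis unfolding pa pb by (simp add: diff_divide_distrib)
  qed
  finally show ?thesis by (simp add: Dv_def fa'_def fb'_def)
qed

lemma final_aa:
  assumes k: "k \<ge> 1" and m: "m \<ge> 1" and Q: "Q \<noteq> 0" and a0: "a \<noteq> 0"
    and fa: "fprime k m Q t a \<noteq> 0"
    and PA: "PV k m Q t A = EE k m Q t a"
    and prod: "\<And>x. x \<noteq> 0 \<Longrightarrow> dirf k m Q t u x - dirf k m Q t v x * dirf k m Q t A x = g x * fprime k m Q t x"
    and lg: "laurent_poly g"
  shows "Rp k m Q t (PV k m Q t A * PV k m Q t u) =
           dirf k m Q t v a * deriv (fprime k m Q t) a / (fprime k m Q t a)^2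
           - deriv (dirf k m Q t v) a / fprime k m Q t a"
proof -
  obtain pg n where g: "\<And>x. x \<noteq> 0 \<Longrightarrow> g x = poly pg x / x ^ n"
    using lg unfolding laurent_poly_def by blast
  define fa' where "fa' = fprime k m Q t a"
  define F where "F = FF k m Q t"
  define Dv where "Dv = dirf k m Q t v"
  define fp where "fp = fprime k m Q t"
  define psi where "psi = (\<lambda>x. Dv x * fp x / (fa' * fa') - 2 * Dv x / fa')"
  define T1 where "T1 = (\<lambda>x. psi x / (x - a)^2)"
  define T3 where "T3 = (\<lambda>x. poly (monom 1 1 * PV k m Q t v) x / poly ([:-a, 1:] * [:-a, 1:] * F) x)"
  define T4 where "T4 = (\<lambda>x. poly (EE k m Q t a * pg) x / x ^ (m + n + 2))"
  have fa0: "fa' \<noteq> 0" using fa by (auto simp: fa'_def)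
  have F0: "F \<noteq> 0" using FF_nz[OF k m Q] by (simp add: F_def)
  have Dvh: "Dv holomorphic_on (UNIV - {0})" unfolding Dv_def by (rule dirf_holo[OF k m])
  have fph: "fp holomorphic_on (UNIV - {0})" unfolding fp_def by (rule fprime_holo[OF k m])
  have psih: "psi holomorphic_on (UNIV - {0})" unfolding psi_def by (intro holomorphic_intros Dvh fph) (use fa0 in auto)
  have g1: "goodf T1" unfolding goodf_def T1_def
    by (intro exI[of _ "{0, a}"] conjI holomorphic_intros holomorphic_on_subset[OF psih]) auto
  have nz3: "[:-a, 1:] * [:-a, 1:] * F \<noteq> 0" using F0 by (simp only: mult_eq_0_iff) simp
  have g3: "goodf T3" unfolding T3_def by (rule goodf_rat[OF nz3])
  have T4h: "T4 holomorphic_on (UNIV - {0})" unfolding T4_def by (intro holomorphic_intros) auto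
  have g4: "goodf T4" unfolding goodf_def using T4h by blast
  have "Rf (\<lambda>x. poly (PV k m Q t A * PV k m Q t u) x / poly (Den k m Q t) x) = Rf (\<lambda>x. T1 x + T3 x + T4 x)"
  proof (rule Rf_cong[of "{0, a} \<union> {x. poly F x = 0}"])
    show "finite ({0, a} \<union> {x. poly F x = 0})" using finite_roots_FF[OF k m Q] by (simp add: F_def)
    fix x assume "x \<notin> {0, a} \<union> {x. poly F x = 0}"
    then have x0: "x \<noteq> 0" and xa: "x \<noteq> a" and Fx: "poly F x \<noteq> 0" by auto
    define y where "y = x ^ m"
    define z where "z = x ^ n"
    have y0: "y \<noteq> 0" "z \<noteq> 0" using x0 by (auto simp: y_def z_def)
    have xm1: "x ^ (m + 1) = x * y" by (simp add: y_def)
    have eA: "poly (PV k m Q t A) x = (poly F x - fa' * (x * y)) / ((x - a) * fa')"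
      unfolding PA EE_val[OF k m a0 fa xa] F_def[symmetric] fa'_def[symmetric] xm1 ..
    have eB: "dirf k m Q t A x = ((poly F x - fa' * (x * y)) / ((x - a) * fa')) / y"
      unfolding dirf_poly[OF k m x0] PA EE_val[OF k m a0 fa xa] F_def[symmetric] fa'_def[symmetric] xm1 y_def ..
    have eDv: "Dv x = poly (PV k m Q t v) x / y" unfolding Dv_def y_def by (rule dirf_poly[OF k m x0])
    have efp: "fp x = poly F x / (x * y)" using fprime_poly[OF k m x0, of Q t] by (simp add: fp_def F_def y_def)
    have eu: "dirf k m Q t u x = Dv x * dirf k m Q t A x + g x * fp x"
      using prod[OF x0] by (simp add: Dv_def fp_def algebra_simps)
    have eU: "poly (PV k m Q t u) x = (poly (PV k m Q t v) x / y * (((poly F x - fa' * (x * y)) / ((x - a) * fa')) / y)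
        + poly pg x / z * (poly F x / (x * y))) * y"
    proof -
      have "poly (PV k m Q t u) x = dirf k m Q t u x * y"
        using dirf_poly[OF k m x0, of Q t u] y0 by (simp add: y_def)
      then show ?thesis unfolding eu eB eDv efp g[OF x0] z_def[symmetric] by simp
    qed
    have eD: "poly (Den k m Q t) x = x * y * poly F x" by (simp add: Den_def poly_monom F_def y_def)
    have "poly (PV k m Q t A * PV k m Q t u) x / poly (Den k m Q t) x =
       ((poly F x - fa' * (x * y)) / ((x - a) * fa')) * ((poly (PV k m Q t v) x / y * (((poly F x - fa' * (x * y)) / ((x - a) * fa')) / y)
        + poly pg x / z * (poly F x / (x * y))) * y) / (x * y * poly F x)"
      unfolding poly_mult eA eU eD ..
    also have "\<dots> = (poly (PV k m Q t v) x / y * (poly F x / (x*y)) / (fa'*fa') - 2 * (poly (PV k m Q t v) x / y) / fa') / (x - a)^2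
       + x * poly (PV k m Q t v) x / ((x - a) * (x - a) * poly F x)
       + ((poly F x - fa'*(x*y))/((x - a)*fa')) * poly pg x / (y * z * x * x)"
      by (rule alg3) (use x0 y0 xa fa0 Fx in auto)
    also have "\<dots> = T1 x + T3 x + T4 x"
    proof -
      have pw: "x ^ (m + n + 2) = y * z * x * x" by (simp add: y_def z_def power_add power2_eq_square)
      have p1: "poly [:-a, 1:] x = x - a" by simp
      have t1: "T1 x = (poly (PV k m Q t v) x / y * (poly F x / (x*y)) / (fa'*fa') - 2 * (poly (PV k m Q t v) x / y) / fa') / (x - a)^2"
        unfolding T1_def psi_def eDv efp ..
      have t3: "T3 x = x * poly (PV k m Q t v) x / ((x - a) * (x - a) * poly F x)"
        unfolding T3_def poly_mult p1 poly_monom by simp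
      have t4: "T4 x = ((poly F x - fa'*(x*y))/((x - a)*fa')) * poly pg x / (y * z * x * x)"
        unfolding T4_def pw poly_mult PA[symmetric] eA ..
      show ?thesis unfolding t1 t3 t4 ..
    qed
    finally show "poly (PV k m Q t A * PV k m Q t u) x / poly (Den k m Q t) x = T1 x + T3 x + T4 x" .
  qed
  also have "\<dots> = Rf T1 + Rf T3 + Rf T4"
    using g1 g3 g4 by (simp add: Rf_add goodf_add)
  also have "Rf T1 = - deriv psi a" unfolding T1_def by (rule Rf_pole2[OF a0 psih])
  also have "Rf T3 = 0" unfolding T3_def F_def by (rule T3_zero[OF k m Q a0 a0])
  also have "Rf T4 = 0" by (rule Rf_holo0[OF T4h])
  finally have R: "Rp k m Q t (PV k m Q t A * PV k m Q t u) = deriv psi a"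
    unfolding Rp_def by simp
  have oS: "open (UNIV - {0::complex})" by (simp add: open_delete)
  have dDv: "(Dv has_field_derivative deriv Dv a) (at a)"
    by (rule holomorphic_derivI[OF Dvh oS]) (use a0 in auto)
  have dfp: "(fp has_field_derivative deriv fp a) (at a)"
    by (rule holomorphic_derivI[OF fph oS]) (use a0 in auto)
  have "(psi has_field_derivative
      ((deriv Dv a * fp a + Dv a * deriv fp a) / (fa' * fa') - 2 * deriv Dv a / fa')) (at a)"
  proof -
    have d1: "((\<lambda>x. Dv x * fp x / (fa' * fa')) has_field_derivative (deriv Dv a * fp a + Dv a * deriv fp a) / (fa' * fa')) (at a)"
      using DERIV_cdivide[OF DERIV_mult[OF dDv dfp], of "fa' * fa'"] by (simp add: mult.commute)
    have d2: "((\<lambda>x. 2 * Dv x / fa') has_field_derivative 2 * deriv Dv a / fa') (at a)"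
      using DERIV_cdivide[OF DERIV_cmult[OF dDv, of 2], of fa'] by simp
    show ?thesis unfolding psi_def using DERIV_diff[OF d1 d2] by simp
  qed
  then have "deriv psi a = (deriv Dv a * fp a + Dv a * deriv fp a) / (fa' * fa') - 2 * deriv Dv a / fa'"
    by (rule DERIV_imp_deriv)
  also have "\<dots> = Dv a * deriv fp a / fa'^2 - deriv Dv a / fa'"
    using fa0 unfolding fp_def fa'_def[symmetric] by (simp add: field_simps power2_eq_square)
  finally show ?thesis using R by (simp add: Dv_def fp_def fa'_def)
qed

lemma shiftp0[simp]: "shiftp t 0 v = t"
  by (simp add: shiftp_def)

lemma line_in_nbhd:
  assumes v: "tangent N v" and r: "r > 0"
  shows "\<exists>d>0. \<forall>s. norm s < d \<longrightarrow> shiftp t s v \<in> nbhd N t r"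
proof -
  define M where "M = (\<Sum>i\<in>{1..N}. norm (v i)) + 1"
  have "0 \<le> (\<Sum>i\<in>{1..N}. norm (v i))" by (rule sum_nonneg) simp
  then have M0: "M > 0" unfolding M_def by linarith
  have vM: "norm (v i) \<le> M" if "i \<in> {1..N}" for i
  proof -
    have "norm (v i) \<le> (\<Sum>i\<in>{1..N}. norm (v i))"
      using that by (intro member_le_sum) auto
    then show ?thesis unfolding M_def by simp
  qed
  define d where "d = r / M"
  have d0: "d > 0" using r M0 by (simp add: d_def)
  have "shiftp t s v \<in> nbhd N t r" if s: "norm s < d" for s
    unfolding nbhd_def
  proof (intro CollectI conjI ballI allI impI)
    fix i assume i: "i \<in> {1..N}"
    have "norm (s * v i) = norm s * norm (v i)" by (simp add: norm_mult)
    also have "\<dots> \<le> norm s * M" using vM[OF i] by (intro mult_left_mono) auto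
    also have "\<dots> < d * M" using s M0 by (intro mult_strict_right_mono) auto
    also have "\<dots> = r" using M0 by (simp add: d_def)
    finally show "cmod (shiftp t s v i - t i) < r" by (simp add: shiftp_def)
  next
    fix i assume "i \<notin> {1..N}"
    then show "shiftp t s v i = t i" using v by (simp add: shiftp_def tangent_def)
  qed
  then show ?thesis using d0 by blast
qed

lemma line_eventually:
  assumes v: "tangent N v" and r: "r > 0"
  shows "eventually (\<lambda>s. shiftp t s v \<in> nbhd N t r) (nhds 0)"
proof -
  obtain d where d: "d > 0" "\<forall>s. norm s < d \<longrightarrow> shiftp t s v \<in> nbhd N t r"
    using line_in_nbhd[OF v r] by blast
  show ?thesis unfolding eventually_nhds
    by (intro exI[of _ "ball 0 d"]) (use d in auto)
qed

lemma line_cont: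
  assumes an: "analyticML N F t lam" and v: "tangent N v"
  shows "isCont (\<lambda>s. F (shiftp t s v) lam) 0"
proof -
  obtain r where r: "r > 0" and cF: "continuous_on (nbhd N t r \<times> ball lam r) (\<lambda>(t', l). F t' l)"
    using an unfolding analyticML_def by blast
  obtain d where d: "d > 0" "\<forall>s. norm s < d \<longrightarrow> shiftp t s v \<in> nbhd N t r"
    using line_in_nbhd[OF v r] by blast
  have cp: "continuous_on (ball 0 d) (\<lambda>s. (shiftp t s v, lam))"
    unfolding shiftp_def by (intro continuous_intros continuous_on_coordinatewise_then_product)
  have "continuous_on (ball 0 d) (\<lambda>s. (\<lambda>(t', l). F t' l) (shiftp t s v, lam))"
  proof (rule continuous_on_compose2[OF cF cp])
    show "(\<lambda>s. (shiftp t s v, lam)) ` ball 0 d \<subseteq> nbhd N t r \<times> ball lam r"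
      using d r by auto
  qed
  then have "continuous_on (ball 0 d) (\<lambda>s. F (shiftp t s v) lam)" by simp
  moreover have "(0::complex) \<in> ball 0 d" using d by simp
  ultimately show ?thesis using continuous_on_eq_continuous_at[of "ball 0 d"] by blast
qed

lemma cycle_basic:
  assumes k: "k \<ge> 1" and m: "m \<ge> 1" and opc: "one_point_cycle k m Q t lam X L"
  shows "X t lam \<noteq> 0" "exp (L t lam) = X t lam" "fprime k m Q t (X t lam) \<noteq> 0"
proof -
  obtain r where r: "r > 0" and eqs: "\<forall>t'\<in>nbhd (k + m) t r. \<forall>l\<in>ball lam r.
        fL k m Q t' (X t' l) = l \<and> exp (L t' l) = X t' l"
    using opc unfolding one_point_cycle_def by blast
  have tn: "t \<in> nbhd (k + m) t r" using r by (simp add: nbhd_def)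
  show e: "exp (L t lam) = X t lam" using eqs tn r by simp
  show x0: "X t lam \<noteq> 0" using e by (metis exp_not_eq_zero)
  obtain r2 where r2: "r2 > 0" and an2: "\<forall>t'\<in>nbhd (k + m) t r2. \<forall>l\<in>ball lam r2.
        (\<forall>i\<in>{1..k+m}. (\<lambda>z. X (t'(i := z)) l) field_differentiable at (t' i)) \<and>
        (\<lambda>z. X t' z) field_differentiable at l"
    using opc unfolding one_point_cycle_def analyticML_def by blast
  have "(\<lambda>z. X t z) field_differentiable at lam" using an2 r2 by (simp add: nbhd_def)
  then obtain Xl where Xl: "((\<lambda>z. X t z) has_field_derivative Xl) (at lam)"
    unfolding field_differentiable_def by blast
  have oS: "open (UNIV - {0::complex})" by (simp add: open_delete)
  have df: "(fL k m Q t has_field_derivative fprime k m Q t (X t lam)) (at (X t lam))"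
    unfolding fprime_def by (rule holomorphic_derivI[OF fL_holo[OF k m] oS]) (use x0 in auto)
  have "((\<lambda>l. fL k m Q t (X t l)) has_field_derivative fprime k m Q t (X t lam) * Xl) (at lam)"
    by (rule DERIV_chain2[OF df Xl])
  then have "((\<lambda>l. l) has_field_derivative fprime k m Q t (X t lam) * Xl) (at lam)"
    by (rule has_field_derivative_transform_within_open[of _ _ _ "ball lam r"]) (use eqs tn r in auto)
  then have "fprime k m Q t (X t lam) * Xl = 1" using DERIV_ident DERIV_unique by blast
  then show "fprime k m Q t (X t lam) \<noteq> 0" by auto
qed

lemma cycle_ev:
  assumes k: "k \<ge> 1" and m: "m \<ge> 1" and opc: "one_point_cycle k m Q t lam X L" and v: "tangent (k + m) v"
  shows "eventually (\<lambda>s. fL k m Q (shiftp t s v) (X (shiftp t s v) lam) = lam \<and>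
            exp (L (shiftp t s v) lam) = X (shiftp t s v) lam \<and> X (shiftp t s v) lam \<noteq> 0) (nhds 0)"
proof -
  obtain r where r: "r > 0" and eqs: "\<forall>t'\<in>nbhd (k + m) t r. \<forall>l\<in>ball lam r.
        fL k m Q t' (X t' l) = l \<and> exp (L t' l) = X t' l"
    using opc unfolding one_point_cycle_def by blast
  show ?thesis using line_eventually[OF v r, of t]
  proof eventually_elim
    case (elim s)
    have lr: "lam \<in> ball lam r" using r by simp
    have e: "fL k m Q (shiftp t s v) (X (shiftp t s v) lam) = lam \<and> exp (L (shiftp t s v) lam) = X (shiftp t s v) lam"
      using eqs elim lr by blast
    then have "X (shiftp t s v) lam \<noteq> 0" by (metis exp_not_eq_zero)
    then show ?case using e by blast
  qed
qed

lemma cycle_DX: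
  assumes k: "k \<ge> 1" and m: "m \<ge> 1" and opc: "one_point_cycle k m Q t lam X L" and v: "tangent (k + m) v"
  shows "((\<lambda>s. X (shiftp t s v) lam) has_field_derivative
           - dirf k m Q t v (X t lam) / fprime k m Q t (X t lam)) (at 0)"
proof -
  note b = cycle_basic[OF k m opc]
  have an: "analyticML (k + m) X t lam" using opc unfolding one_point_cycle_def by blast
  have "((\<lambda>s. X (shiftp t s v) lam) has_field_derivative
      - LPI (II k m) (dcf k m Q t v) (X (shiftp t 0 v) lam) / LPId (II k m) (cf k m Q (shiftp t 0 v)) (X (shiftp t 0 v) lam)) (at 0)"
  proof (rule IMPL_LP[where C = "\<lambda>s n. cf k m Q (shiftp t s v) n"])
    show "((\<lambda>s. cf k m Q (shiftp t s v) n) has_field_derivative dcf k m Q t v n) (at 0)" for n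
      by (rule cf_deriv[OF m])
    show "isCont (\<lambda>s. X (shiftp t s v) lam) 0" by (rule line_cont[OF an v])
    show "X (shiftp t 0 v) lam \<noteq> 0" using b by simp
    show "LPId (II k m) (cf k m Q (shiftp t 0 v)) (X (shiftp t 0 v) lam) \<noteq> 0"
      using b fprime_LP[OF k m b(1), of Q t] by simp
    have "eventually (\<lambda>s. LPI (II k m) (cf k m Q (shiftp t s v)) (X (shiftp t s v) lam) =
             LPI (II k m) (cf k m Q (shiftp t 0 v)) (X (shiftp t 0 v) lam)) (nhds 0)"
      using cycle_ev[OF k m opc v]
    proof eventually_elim
      case (elim s)
      then have e1: "fL k m Q (shiftp t s v) (X (shiftp t s v) lam) = lam"
        and e3: "X (shiftp t s v) lam \<noteq> 0" by auto
      have "LPI (II k m) (cf k m Q (shiftp t s v)) (X (shiftp t s v) lam) = lam"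
        using fL_LP[OF k m e3, of Q "shiftp t s v"] e1 by simp
      moreover have "LPI (II k m) (cf k m Q (shiftp t 0 v)) (X (shiftp t 0 v) lam) = lam"
      proof -
        have h: "fL k m Q t (X t lam) = lam"
          using eventually_nhds_x_imp_x[OF cycle_ev[OF k m opc v]] by simp
        show ?thesis using fL_LP[OF k m b(1), of Q t] h by simp
      qed
      ultimately show ?case by simp
    qed
    then show "eventually (\<lambda>s. LPI (II k m) (cf k m Q (shiftp t s v)) (X (shiftp t s v) lam) =
             LPI (II k m) (cf k m Q (shiftp t 0 v)) (X (shiftp t 0 v) lam)) (at 0)"
      by (simp add: eventually_at_filter eventually_mono)
  qed
  then show ?thesis using dirf_LP[OF k m b(1), of Q t v] fprime_LP[OF k m b(1), of Q t] by simp
qed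

lemma cycle_DL:
  assumes k: "k \<ge> 1" and m: "m \<ge> 1" and opc: "one_point_cycle k m Q t lam X L" and v: "tangent (k + m) v"
  shows "((\<lambda>s. L (shiftp t s v) lam) has_field_derivative
           (- dirf k m Q t v (X t lam) / fprime k m Q t (X t lam)) / X t lam) (at 0)"
proof -
  have an: "analyticML (k + m) L t lam" using opc unfolding one_point_cycle_def by blast
  have "((\<lambda>s. L (shiftp t s v) lam) has_field_derivative
           (- dirf k m Q t v (X t lam) / fprime k m Q t (X t lam)) / X (shiftp t 0 v) lam) (at 0)"
  proof (rule IMPL_exp[OF cycle_DX[OF k m opc v] line_cont[OF an v]])
    show "\<forall>\<^sub>F s in nhds 0. exp (L (shiftp t s v) lam) = X (shiftp t s v) lam"
      using cycle_ev[OF k m opc v] by (rule eventually_mono) simp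
  qed
  then show ?thesis by simp
qed

lemma cycle_Dfp:
  assumes k: "k \<ge> 1" and m: "m \<ge> 1" and opc: "one_point_cycle k m Q t lam X L" and v: "tangent (k + m) v"
  shows "((\<lambda>s. fprime k m Q (shiftp t s v) (X (shiftp t s v) lam)) has_field_derivative
           deriv (dirf k m Q t v) (X t lam) + deriv (fprime k m Q t) (X t lam) *
             (- dirf k m Q t v (X t lam) / fprime k m Q t (X t lam))) (at 0)"
proof -
  note b = cycle_basic[OF k m opc]
  define x0 where "x0 = X t lam"
  have x0: "x0 \<noteq> 0" using b by (simp add: x0_def)
  have D: "((\<lambda>s. LPId (II k m) (cf k m Q (shiftp t s v)) (X (shiftp t s v) lam)) has_field_derivative
       LPId (II k m) (dcf k m Q t v) (X (shiftp t 0 v) lam) + LPIdd (II k m) (cf k m Q (shiftp t 0 v)) (X (shiftp t 0 v) lam) *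
         (- dirf k m Q t v (X t lam) / fprime k m Q t (X t lam))) (at 0)"
    by (rule LPId_comp_deriv[OF cf_deriv[OF m] cycle_DX[OF k m opc v]]) (use b in simp)
  have oS: "open (UNIV - {0::complex})" by (simp add: open_delete)
  have d1: "deriv (dirf k m Q t v) x0 = LPId (II k m) (dcf k m Q t v) x0"
  proof (rule DERIV_imp_deriv)
    show "(dirf k m Q t v has_field_derivative LPId (II k m) (dcf k m Q t v) x0) (at x0)"
      by (rule has_field_derivative_transform_within_open[OF LPI_deriv[OF x0] oS])
         (use x0 dirf_LP[OF k m] in auto)
  qed
  have d2: "deriv (fprime k m Q t) x0 = LPIdd (II k m) (cf k m Q t) x0"
  proof (rule DERIV_imp_deriv)
    show "(fprime k m Q t has_field_derivative LPIdd (II k m) (cf k m Q t) x0) (at x0)"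
      by (rule has_field_derivative_transform_within_open[OF LPId_deriv[OF x0] oS])
         (use x0 fprime_LP[OF k m] in auto)
  qed
  have ev: "eventually (\<lambda>s. LPId (II k m) (cf k m Q (shiftp t s v)) (X (shiftp t s v) lam) =
      fprime k m Q (shiftp t s v) (X (shiftp t s v) lam)) (nhds 0)"
    using cycle_ev[OF k m opc v]
  proof (rule eventually_mono)
    fix s assume "fL k m Q (shiftp t s v) (X (shiftp t s v) lam) = lam \<and>
            exp (L (shiftp t s v) lam) = X (shiftp t s v) lam \<and> X (shiftp t s v) lam \<noteq> 0"
    then have e3: "X (shiftp t s v) lam \<noteq> 0" by blast
    show "LPId (II k m) (cf k m Q (shiftp t s v)) (X (shiftp t s v) lam) =
      fprime k m Q (shiftp t s v) (X (shiftp t s v) lam)"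
      using fprime_LP[OF k m e3, of Q "shiftp t s v"] by simp
  qed
  have "((\<lambda>s. fprime k m Q (shiftp t s v) (X (shiftp t s v) lam)) has_field_derivative
       LPId (II k m) (dcf k m Q t v) (X (shiftp t 0 v) lam) + LPIdd (II k m) (cf k m Q (shiftp t 0 v)) (X (shiftp t 0 v) lam) *
         (- dirf k m Q t v (X t lam) / fprime k m Q t (X t lam))) (at 0)"
    using DERIV_cong_ev[OF refl ev refl] D by blast
  then show ?thesis using d1 d2 by (simp add: x0_def)
qed

lemma rep_EE:
  assumes k: "k \<ge> 1" and m: "m \<ge> 1" and Q: "Q \<noteq> 0"
    and opc: "one_point_cycle k m Q t lam X L" and rep: "represents_I0 k m Q t lam L A"
  shows "PV k m Q t A = EE k m Q t (X t lam)"
proof -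
  note b = cycle_basic[OF k m opc]
  define a where "a = X t lam"
  have a0: "a \<noteq> 0" and fa: "fprime k m Q t a \<noteq> 0" using b by (auto simp: a_def)
  show ?thesis unfolding a_def[symmetric]
  proof (rule PA_eq[OF k m Q a0 fa])
    fix w assume w: "tangent (k + m) w"
    have "Rp k m Q t (PV k m Q t A * PV k m Q t w) = pair k m Q t A w" by (rule pair_Rp[OF k m, symmetric])
    also have "\<dots> = - Dir t w (\<lambda>t'. L t' lam)" using rep w unfolding represents_I0_def by blast
    also have "Dir t w (\<lambda>t'. L t' lam) = (- dirf k m Q t w a / fprime k m Q t a) / a"
      unfolding Dir_def a_def by (rule DERIV_imp_deriv[OF cycle_DL[OF k m opc w]])
    also have "dirf k m Q t w a = poly (PV k m Q t w) a / a ^ m" by (rule dirf_poly[OF k m a0])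
    finally show "Rp k m Q t (PV k m Q t A * PV k m Q t w) = poly (PV k m Q t w) a / (a ^ (m + 1) * fprime k m Q t a)"
      using a0 fa by (simp add: field_simps)
  qed
qed

theorem mainTheorem11:
  fixes k m :: nat and Q lam :: complex and t :: "nat \<Rightarrow> complex"
    and Xa La Xb Lb :: "(nat \<Rightarrow> complex) \<Rightarrow> complex \<Rightarrow> complex"
    and A B :: "nat \<Rightarrow> complex"
  assumes "k \<ge> 1" and "m \<ge> 1" and "Q \<noteq> 0"
    and "semisimple k m Q t"
    and "one_point_cycle k m Q t lam Xa La"
    and "one_point_cycle k m Q t lam Xb Lb"
    and "represents_I0 k m Q t lam La A"
    and "represents_I0 k m Q t lam Lb B"
  shows "(Xa t lam \<noteq> Xb t lam \<longrightarrow>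
            (\<forall>v u. tangent (k + m) v \<longrightarrow> is_prod k m Q t v B u \<longrightarrow>
               pair k m Q t A u = Dir t v (\<lambda>t'. Xa t' lam - Xb t' lam) / (Xa t lam - Xb t lam)))
       \<and> (\<forall>v u. tangent (k + m) v \<longrightarrow> is_prod k m Q t v A u \<longrightarrow>
               pair k m Q t A u =
                 - Dir t v (\<lambda>t'. fprime k m Q t' (Xa t' lam)) / fprime k m Q t (Xa t lam))"
proof -
  note k = assms(1) and m = assms(2) and Q = assms(3)
  note opa = assms(5) and opb = assms(6)
  note ba = cycle_basic[OF k m opa] and bb = cycle_basic[OF k m opb]
  have PA: "PV k m Q t A = EE k m Q t (Xa t lam)" by (rule rep_EE[OF k m Q opa assms(7)])
  have PB: "PV k m Q t B = EE k m Q t (Xb t lam)" by (rule rep_EE[OF k m Q opb assms(8)])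
  show ?thesis
  proof (intro conjI impI allI)
    fix v u assume ab: "Xa t lam \<noteq> Xb t lam" and v: "tangent (k + m) v" and pr: "is_prod k m Q t v B u"
    obtain g where lg: "laurent_poly g" and
      gp: "\<And>x. x \<noteq> 0 \<Longrightarrow> dirf k m Q t u x - dirf k m Q t v x * dirf k m Q t B x = g x * fprime k m Q t x"
      using pr unfolding is_prod_def by blast
    have "pair k m Q t A u = Rp k m Q t (PV k m Q t A * PV k m Q t u)" by (rule pair_Rp[OF k m])
    also have "\<dots> = (dirf k m Q t v (Xb t lam) / fprime k m Q t (Xb t lam)
                    - dirf k m Q t v (Xa t lam) / fprime k m Q t (Xa t lam)) / (Xa t lam - Xb t lam)"
      by (rule final_ab[OF k m Q ba(1) bb(1) ab ba(3) bb(3) PA PB gp lg])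
    also have "\<dots> = Dir t v (\<lambda>t'. Xa t' lam - Xb t' lam) / (Xa t lam - Xb t lam)"
    proof -
      have "Dir t v (\<lambda>t'. Xa t' lam - Xb t' lam) =
          (- dirf k m Q t v (Xa t lam) / fprime k m Q t (Xa t lam)) - (- dirf k m Q t v (Xb t lam) / fprime k m Q t (Xb t lam))"
        unfolding Dir_def by (rule DERIV_imp_deriv[OF DERIV_diff[OF cycle_DX[OF k m opa v] cycle_DX[OF k m opb v]]])
      then show ?thesis by (simp add: algebra_simps)
    qed
    finally show "pair k m Q t A u = Dir t v (\<lambda>t'. Xa t' lam - Xb t' lam) / (Xa t lam - Xb t lam)" .
  next
    fix v u assume v: "tangent (k + m) v" and pr: "is_prod k m Q t v A u"
    obtain g where lg: "laurent_poly g" and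
      gp: "\<And>x. x \<noteq> 0 \<Longrightarrow> dirf k m Q t u x - dirf k m Q t v x * dirf k m Q t A x = g x * fprime k m Q t x"
      using pr unfolding is_prod_def by blast
    define a where "a = Xa t lam"
    define fa where "fa = fprime k m Q t a"
    have fa0: "fa \<noteq> 0" using ba by (simp add: fa_def a_def)
    have "pair k m Q t A u = Rp k m Q t (PV k m Q t A * PV k m Q t u)" by (rule pair_Rp[OF k m])
    also have "\<dots> = dirf k m Q t v a * deriv (fprime k m Q t) a / fa^2 - deriv (dirf k m Q t v) a / fa"
      unfolding fa_def a_def by (rule final_aa[OF k m Q ba(1) ba(3) PA gp lg])
    also have "\<dots> = - Dir t v (\<lambda>t'. fprime k m Q t' (Xa t' lam)) / fprime k m Q t (Xa t lam)"
    proof -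
      have eqD: "Dir t v (\<lambda>t'. fprime k m Q t' (Xa t' lam)) =
          deriv (dirf k m Q t v) a + deriv (fprime k m Q t) a * (- dirf k m Q t v a / fa)"
        unfolding Dir_def a_def fa_def by (rule DERIV_imp_deriv[OF cycle_Dfp[OF k m opa v]])
      show ?thesis unfolding eqD a_def[symmetric] fa_def[symmetric] using fa0
        by (simp add: field_simps power2_eq_square)
    qed
    finally show "pair k m Q t A u = - Dir t v (\<lambda>t'. fprime k m Q t' (Xa t' lam)) / fprime k m Q t (Xa t lam)" .
  qed
qed

end
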